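(* Let $\mathbf{W}=(\mathbf{w}_j)_{j\ge1}$ be DSB weights with parameters $(\beta,\theta)$, $\beta,\theta>0$, and let $(\mathbf{d}_i)_{i\ge1}$ be conditionally i.i.d. given $\mathbf{W}$ with $\mathbb{P}[\mathbf{d}_i=j\mid\mathbf{W}]=\mathbf{w}_j$. Then for any positive integers $d_1,\dots,d_n$, $$\mathbb{P}[\mathbf{d}_1=d_1,\dots,\mathbf{d}_n=d_n]=\sum_{\{A_1,\dots,A_m\}}\frac{(\beta\theta)^m}{(\beta)_k}\prod_{j=1}^m\frac{(|A_j|-1)!\,\big(\sum_{i\in A_j}r_i\big)!}{\big(\theta+\sum_{i\in A_j}t_i\big)_{1+\sum_{i\in A_j}r_i}},$$ where $r_i=\sum_{l=1}^n\mathbf{1}_{\{d_l=i\}}$, $t_i=\sum_{l=1}^n\mathbf{1}_{\{d_l>i\}}$, $(x)_m=\prod_{i=0}^{m-1}(x+i)$, and the sum ranges over all partitions $\{A_1,\dots,A_m\}$ of $\{1,\dots,k\}$ with $k=\max\{d_1,\dots,d_n\}$.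
   Context: DSB weights with parameters $(\beta,\theta)$: $\mathbf{w}_1=\mathbf{v}_1$, $\mathbf{w}_j=\mathbf{v}_j\prod_{i<j}(1-\mathbf{v}_i)$, where $(\mathbf{v}_i)_{i\ge1}$ are conditionally i.i.d. given $\boldsymbol{\nu}$ with law $\boldsymbol{\nu}$, and $\boldsymbol{\nu}$ is a Dirichlet process on $[0,1]$ with total mass parameter $\beta$ and base measure $\mathrm{Be}(1,\theta)$. *)

theory Defs
  imports "HOL-Probability.Probability" "HOL-Library.Disjoint_Sets"
begin

definition beta_one :: "real \<Rightarrow> real measure" where
  "beta_one \<theta> = density lborel
     (\<lambda>x. ennreal (indicator {0<..<1} x * \<theta> * (1 - x) powr (\<theta> - 1)))"

text \<open>Dirichlet density on the coordinates in S minus the distinguished last index m.\<close>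
definition dirichlet_density :: "(nat \<Rightarrow> real) \<Rightarrow> nat set \<Rightarrow> nat \<Rightarrow> (nat \<Rightarrow> real) \<Rightarrow> real" where
  "dirichlet_density \<alpha> S m x =
     (if (\<forall>i\<in>S - {m}. 0 < x i) \<and> (\<Sum>i\<in>S - {m}. x i) < 1 then
        Gamma (\<Sum>i\<in>S. \<alpha> i) / (\<Prod>i\<in>S. Gamma (\<alpha> i))
        * (\<Prod>i\<in>S - {m}. x i powr (\<alpha> i - 1))
        * (1 - (\<Sum>i\<in>S - {m}. x i)) powr (\<alpha> m - 1)
      else 0)"

text \<open>The random vector (X 0, ..., X (k-1)) on M has the Dirichlet(alpha 0, ..., alpha (k-1))
  distribution (alpha i >= 0, with the standard convention that coordinates with
  alpha i = 0 vanish almost surely, the remaining ones being Dirichlet distributed).\<close>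
definition has_dirichlet :: "'w measure \<Rightarrow> ('w \<Rightarrow> nat \<Rightarrow> real) \<Rightarrow> nat \<Rightarrow> (nat \<Rightarrow> real) \<Rightarrow> bool" where
  "has_dirichlet M X k \<alpha> =
     (let S = {i\<in>{..<k}. 0 < \<alpha> i}; m = Max S; T = S - {m} in
       S \<noteq> {} \<and> (\<forall>i<k. 0 \<le> \<alpha> i) \<and>
       (\<forall>i\<in>{..<k} - S. AE \<omega> in M. X \<omega> i = 0) \<and>
       distr M (Pi\<^sub>M T (\<lambda>_. lborel)) (\<lambda>\<omega>. restrict (X \<omega>) T)
         = density (Pi\<^sub>M T (\<lambda>_. lborel)) (\<lambda>x. ennreal (dirichlet_density \<alpha> S m x)) \<and>
       (AE \<omega> in M. X \<omega> m = 1 - (\<Sum>i\<in>T. X \<omega> i)))"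

text \<open>Ferguson's definition: nu is a Dirichlet process on [0,1] with total mass beta
  and base probability measure mu.\<close>
definition dirichlet_process :: "'w measure \<Rightarrow> ('w \<Rightarrow> real measure) \<Rightarrow> real \<Rightarrow> real measure \<Rightarrow> bool" where
  "dirichlet_process M \<nu> \<beta> \<mu> =
     (\<nu> \<in> measurable M (prob_algebra borel) \<and>
      (\<forall>k>0. \<forall>B :: nat \<Rightarrow> real set.
         (\<forall>i<k. B i \<in> sets borel) \<and> disjoint_family_on B {..<k} \<and> (\<Union>i<k. B i) = {0..1}
         \<longrightarrow> has_dirichlet M (\<lambda>\<omega> i. measure (\<nu> \<omega>) (B i)) k (\<lambda>i. \<beta> * measure \<mu> (B i))))"

definition dsb_weight :: "(nat \<Rightarrow> real) \<Rightarrow> nat \<Rightarrow> real" where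
  "dsb_weight v j = (if j = 0 then 0 else v j * (\<Prod>i\<in>{1..<j}. (1 - v i)))"

end

theory Submission
  imports Defs
begin

definition delx :: "'a \<Rightarrow> 'a set set \<Rightarrow> 'a set set" where
  "delx x Q = (\<lambda>A. A - {x}) ` Q - {{}}"

lemma delx_partition:
  assumes "partition_on (insert x I) Q" "x \<notin> I"
  shows "partition_on I (delx x Q)"
proof -
  have "partition_on ((\<lambda>A. A - {x}) (insert x I)) ((\<lambda>A. A - {x}) ` Q - {{}})"
    by (rule partition_on_transform[OF assms(1)]) (auto simp: disjnt_def)
  thus ?thesis using assms(2) by (simp add: delx_def)
qed

lemma delx_block:
  assumes "partition_on J Q" "B0 \<in> Q" "x \<in> B0"
  shows "delx x Q = (Q - {B0}) \<union> ({B0 - {x}} - {{}})"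
proof -
  have d: "A \<inter> B0 = {}" if "A \<in> Q" "A \<noteq> B0" for A
    using assms that partition_onD2[OF assms(1)] by (auto simp: disjoint_def)
  have ne: "{} \<notin> Q" using partition_onD3[OF assms(1)] .
  show ?thesis unfolding delx_def
  proof (intro equalityI subsetI)
    fix C assume "C \<in> (\<lambda>A. A - {x}) ` Q - {{}}"
    then obtain A where A: "A \<in> Q" "C = A - {x}" "C \<noteq> {}" by auto
    show "C \<in> (Q - {B0}) \<union> ({B0 - {x}} - {{}})"
    proof (cases "A = B0")
      case False
      with d[OF A(1)] assms(3) have "C = A" using A by auto
      with A False show ?thesis by auto
    qed (use A in auto)
  next
    fix C assume C: "C \<in> (Q - {B0}) \<union> ({B0 - {x}} - {{}})"
    show "C \<in> (\<lambda>A. A - {x}) ` Q - {{}}"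
    proof (cases "C \<in> Q - {B0}")
      case True
      with d[of C] assms(3) have "C - {x} = C" by auto
      with True ne show ?thesis by (auto intro!: image_eqI[of _ _ C])
    qed (use C assms in auto)
  qed
qed

lemma part_fiber:
  assumes "finite I" "x \<notin> I" "partition_on I P"
  shows "{Q \<in> {Q. partition_on (insert x I) Q}. delx x Q = P}
       = insert (insert {x} P) ((\<lambda>A. insert (insert x A) (P - {A})) ` P)"
proof (intro equalityI subsetI)
  fix Q assume "Q \<in> {Q \<in> {Q. partition_on (insert x I) Q}. delx x Q = P}"
  hence Q: "partition_on (insert x I) Q" "delx x Q = P" by auto
  from partition_onD1[OF Q(1)] obtain B0 where B0: "B0 \<in> Q" "x \<in> B0" by auto
  have dB: "A \<inter> B0 = {}" if "A \<in> Q" "A \<noteq> B0" for A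
    using B0 that partition_onD2[OF Q(1)] by (auto simp: disjoint_def)
  have ne: "{} \<notin> Q" using partition_onD3[OF Q(1)] .
  have P: "P = (Q - {B0}) \<union> ({B0 - {x}} - {{}})"
    using delx_block[OF Q(1) B0] Q(2) by simp
  show "Q \<in> insert (insert {x} P) ((\<lambda>A. insert (insert x A) (P - {A})) ` P)"
  proof (cases "B0 = {x}")
    case True
    hence "P = Q - {B0}" using P by auto
    hence "Q = insert {x} P" using B0 True by auto
    thus ?thesis by simp
  next
    case False
    define A where "A = B0 - {x}"
    have Ane: "A \<noteq> {}" using False B0 by (auto simp: A_def)
    have AnQ: "A \<notin> Q - {B0}"
    proof
      assume "A \<in> Q - {B0}"
      with dB[of A] have "A \<inter> B0 = {}" by auto
      with Ane show False by (auto simp: A_def)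
    qed
    have PA: "P = insert A (Q - {B0})" using P Ane by (auto simp: A_def)
    have "P - {A} = Q - {B0}" using PA AnQ by auto
    moreover have "insert x A = B0" using B0 by (auto simp: A_def)
    ultimately have "Q = insert (insert x A) (P - {A})" using B0 by auto
    moreover have "A \<in> P" using PA by auto
    ultimately show ?thesis by blast
  qed
next
  fix Q assume Q: "Q \<in> insert (insert {x} P) ((\<lambda>A. insert (insert x A) (P - {A})) ` P)"
  have UP: "\<Union>P = I" using partition_onD1[OF assms(3)] by simp
  have neP: "{} \<notin> P" using partition_onD3[OF assms(3)] .
  have xnA: "x \<notin> A" if "A \<in> P" for A using that UP assms(2) by auto
  show "Q \<in> {Q \<in> {Q. partition_on (insert x I) Q}. delx x Q = P}"
  proof (cases "Q = insert {x} P")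
    case True
    have "disjnt {x} (\<Union>P)" using UP assms(2) by (auto simp: disjnt_def)
    hence "partition_on (insert x I) Q" unfolding True
      by (subst partition_on_insert) (use assms in auto)
    moreover have "delx x Q = P"
    proof -
      have "delx x Q = (Q - {{x}}) \<union> ({{x} - {x}} - {{}})"
        by (rule delx_block[OF \<open>partition_on (insert x I) Q\<close>]) (auto simp: True)
      also have "\<dots> = P" unfolding True using xnA by auto
      finally show ?thesis .
    qed
    ultimately show ?thesis by auto
  next
    case False
    then obtain A where A: "A \<in> P" "Q = insert (insert x A) (P - {A})" using Q by auto
    have dA: "A' \<inter> A = {}" if "A' \<in> P" "A' \<noteq> A" for A'
      using A that partition_onD2[OF assms(3)] by (auto simp: disjoint_def)
    have "disjnt A (\<Union>(P - {A}))" using dA by (auto simp: disjnt_def)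
    hence pPA: "partition_on (I - A) (P - {A})"
      using assms(3) A(1) partition_on_insert[of A "P - {A}" I] by (simp add: insert_absorb)
    have "disjnt (insert x A) (\<Union>(P - {A}))" using dA xnA UP assms(2) by (auto simp: disjnt_def)
    moreover have "insert x I - insert x A = I - A" using assms(2) by auto
    ultimately have pQ: "partition_on (insert x I) Q" unfolding A(2)
      by (subst partition_on_insert) (use pPA A UP in auto)
    have "delx x Q = (Q - {insert x A}) \<union> ({insert x A - {x}} - {{}})"
      by (rule delx_block[OF pQ]) (auto simp: A)
    also have "\<dots> = P"
    proof -
      have "insert x A \<notin> P - {A}" using xnA by auto
      hence "Q - {insert x A} = P - {A}" using A by auto
      moreover have "insert x A - {x} = A" using xnA[OF A(1)] by auto
      ultimately show ?thesis using A neP by auto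
    qed
    finally show ?thesis using pQ by auto
  qed
qed

lemma part_rec:
  fixes F :: "'a set set \<Rightarrow> 'b::comm_monoid_add"
  assumes "finite I" "x \<notin> I"
  shows "(\<Sum>Q\<in>{Q. partition_on (insert x I) Q}. F Q)
       = (\<Sum>P\<in>{P. partition_on I P}. F (insert {x} P) + (\<Sum>A\<in>P. F (insert (insert x A) (P - {A}))))"
proof -
  have fin1: "finite {Q. partition_on (insert x I) Q}" using assms by (simp add: finitely_many_partition_on)
  have fin2: "finite {P. partition_on I P}" using assms by (simp add: finitely_many_partition_on)
  have "(\<Sum>Q\<in>{Q. partition_on (insert x I) Q}. F Q)
     = (\<Sum>P\<in>{P. partition_on I P}. \<Sum>Q\<in>{Q \<in> {Q. partition_on (insert x I) Q}. delx x Q = P}. F Q)"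
    by (rule sum.group[symmetric, OF fin1 fin2]) (use delx_partition assms in auto)
  also have "\<dots> = (\<Sum>P\<in>{P. partition_on I P}. F (insert {x} P) + (\<Sum>A\<in>P. F (insert (insert x A) (P - {A}))))"
  proof (rule sum.cong[OF refl])
    fix P assume "P \<in> {P. partition_on I P}"
    hence pP: "partition_on I P" by simp
    have finP: "finite P" using finite_elements[OF assms(1) pP] .
    have UP: "\<Union>P = I" using partition_onD1[OF pP] by simp
    have neP: "{} \<notin> P" using partition_onD3[OF pP] .
    have xnA: "x \<notin> A" if "A \<in> P" for A using that UP assms(2) by auto
    have nin: "insert {x} P \<notin> (\<lambda>A. insert (insert x A) (P - {A})) ` P"
    proof
      assume "insert {x} P \<in> (\<lambda>A. insert (insert x A) (P - {A})) ` P"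
      then obtain A where A: "A \<in> P" "insert {x} P = insert (insert x A) (P - {A})" by auto
      hence "{x} \<in> insert (insert x A) (P - {A})" by auto
      moreover have "A \<noteq> {}" using A(1) neP by auto
      hence "{x} \<noteq> insert x A" using xnA[OF A(1)] by auto
      moreover have "{x} \<notin> P" using xnA by auto
      ultimately show False by auto
    qed
    have inj: "inj_on (\<lambda>A. insert (insert x A) (P - {A})) P"
    proof (rule inj_onI)
      fix A B assume AB: "A \<in> P" "B \<in> P" "insert (insert x A) (P - {A}) = insert (insert x B) (P - {B})"
      hence "insert x A \<in> insert (insert x B) (P - {B})" by auto
      moreover have "insert x A \<notin> P" using xnA by auto
      ultimately have "insert x A = insert x B" by auto
      thus "A = B" using xnA AB by (metis insert_ident)
    qed
    show "(\<Sum>Q\<in>{Q \<in> {Q. partition_on (insert x I) Q}. delx x Q = P}. F Q)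
        = F (insert {x} P) + (\<Sum>A\<in>P. F (insert (insert x A) (P - {A})))"
      unfolding part_fiber[OF assms pP]
      by (subst sum.insert) (use finP nin in \<open>auto simp: sum.reindex[OF inj]\<close>)
  qed
  finally show ?thesis .
qed

definition Ufun :: "(nat set \<Rightarrow> real) \<Rightarrow> nat set \<Rightarrow> real" where
  "Ufun h I = (\<Sum>P\<in>{P. partition_on I P}. \<Prod>A\<in>P. fact (card A - 1) * h A)"

lemma Ufun_rec:
  assumes "finite I" "x \<notin> I"
  shows "Ufun h (insert x I) = h {x} * Ufun h I
     + (\<Sum>j\<in>I. Ufun (\<lambda>A. if j \<in> A then h (insert x A) else h A) I)"
proof -
  let ?c = "\<lambda>A. fact (card A - 1) * h A :: real"
  have "Ufun h (insert x I) = (\<Sum>P\<in>{P. partition_on I P}. (\<Prod>A\<in>insert {x} P. ?c A)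
          + (\<Sum>A\<in>P. \<Prod>B\<in>insert (insert x A) (P - {A}). ?c B))"
    unfolding Ufun_def by (rule part_rec[OF assms, where F="\<lambda>Q. \<Prod>A\<in>Q. ?c A"])
  also have "\<dots> = (\<Sum>P\<in>{P. partition_on I P}. h {x} * (\<Prod>A\<in>P. ?c A)
          + (\<Sum>j\<in>I. \<Prod>A\<in>P. fact (card A - 1) * (if j \<in> A then h (insert x A) else h A)))"
  proof (rule sum.cong[OF refl])
    fix P assume "P \<in> {P. partition_on I P}"
    hence pP: "partition_on I P" by simp
    have finP: "finite P" using finite_elements[OF assms(1) pP] .
    have UP: "\<Union>P = I" using partition_onD1[OF pP] by simp
    have neP: "{} \<notin> P" using partition_onD3[OF pP] .
    have xnA: "x \<notin> A" if "A \<in> P" for A using that UP assms(2) by auto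
    have finA: "finite A" if "A \<in> P" for A using that UP assms(1) by (metis Union_upper finite_subset)
    have dis: "A \<inter> B = {}" if "A \<in> P" "B \<in> P" "A \<noteq> B" for A B
      using that partition_onD2[OF pP] by (auto simp: disjoint_def)
    have 1: "(\<Prod>A\<in>insert {x} P. ?c A) = h {x} * (\<Prod>A\<in>P. ?c A)"
      using finP xnA by (subst prod.insert) auto
    have 2: "(\<Prod>B\<in>insert (insert x A) (P - {A}). ?c B) = of_nat (card A) * fact (card A - 1) * h (insert x A) * (\<Prod>B\<in>P - {A}. ?c B)"
      if A: "A \<in> P" for A
    proof -
      have "insert x A \<notin> P - {A}" using xnA by auto
      hence "(\<Prod>B\<in>insert (insert x A) (P - {A}). ?c B) = ?c (insert x A) * (\<Prod>B\<in>P - {A}. ?c B)"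
        using finP by (subst prod.insert) auto
      moreover have "card (insert x A) - 1 = card A" using xnA[OF A] finA[OF A] by simp
      moreover have "card A > 0" using A neP finA[OF A] card_gt_0_iff by blast
      hence "(fact (card A) :: real) = of_nat (card A) * fact (card A - 1)"
        by (rule fact_reduce)
      ultimately show ?thesis by simp
    qed
    have 3: "(\<Sum>j\<in>I. \<Prod>A\<in>P. fact (card A - 1) * (if j \<in> A then h (insert x A) else h A))
          = (\<Sum>A\<in>P. \<Sum>j\<in>A. fact (card A - 1) * h (insert x A) * (\<Prod>B\<in>P - {A}. ?c B))"
    proof -
      have "(\<Sum>j\<in>I. \<Prod>A\<in>P. fact (card A - 1) * (if j \<in> A then h (insert x A) else h A))
          = (\<Sum>A\<in>P. \<Sum>j\<in>A. \<Prod>B\<in>P. fact (card B - 1) * (if j \<in> B then h (insert x B) else h B))"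
        unfolding UP[symmetric] by (rule sum.Union_disjoint[unfolded o_def]) (use finA dis in blast)+
      also have "\<dots> = (\<Sum>A\<in>P. \<Sum>j\<in>A. fact (card A - 1) * h (insert x A) * (\<Prod>B\<in>P - {A}. ?c B))"
      proof (intro sum.cong refl)
        fix A j assume A: "A \<in> P" and j: "j \<in> A"
        have "(\<Prod>B\<in>P. fact (card B - 1) * (if j \<in> B then h (insert x B) else h B))
            = (fact (card A - 1) * h (insert x A)) * (\<Prod>B\<in>P - {A}. fact (card B - 1) * (if j \<in> B then h (insert x B) else h B))"
          using A j finP by (subst prod.remove[of _ A]) auto
        also have "(\<Prod>B\<in>P - {A}. fact (card B - 1) * (if j \<in> B then h (insert x B) else h B)) = (\<Prod>B\<in>P - {A}. ?c B)"
          using dis A j by (intro prod.cong) auto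
        finally show "(\<Prod>B\<in>P. fact (card B - 1) * (if j \<in> B then h (insert x B) else h B)) = fact (card A - 1) * h (insert x A) * (\<Prod>B\<in>P - {A}. ?c B)" .
      qed
      finally show ?thesis .
    qed
    show "(\<Prod>A\<in>insert {x} P. ?c A) + (\<Sum>A\<in>P. \<Prod>B\<in>insert (insert x A) (P - {A}). ?c B)
        = h {x} * (\<Prod>A\<in>P. ?c A) + (\<Sum>j\<in>I. \<Prod>A\<in>P. fact (card A - 1) * (if j \<in> A then h (insert x A) else h A))"
      unfolding 1 3 using 2 by (simp add: sum_distrib_left mult_ac)
  qed
  also have "\<dots> = h {x} * Ufun h I + (\<Sum>j\<in>I. Ufun (\<lambda>A. if j \<in> A then h (insert x A) else h A) I)"
  proof -
    have "(\<Sum>P\<in>{P. partition_on I P}. \<Sum>j\<in>I. \<Prod>A\<in>P. fact (card A - 1) * (if j \<in> A then h (insert x A) else h A))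
       = (\<Sum>j\<in>I. \<Sum>P\<in>{P. partition_on I P}. \<Prod>A\<in>P. fact (card A - 1) * (if j \<in> A then h (insert x A) else h A))"
      by (rule sum.swap)
    thus ?thesis unfolding Ufun_def sum.distrib sum_distrib_left by simp
  qed
  finally show ?thesis .
qed

lemma beta_scaled:
  fixes a b c :: real
  assumes a: "a > 0" and b: "b > 0" and c: "c > 0"
  shows "(\<integral>\<^sup>+y. ennreal (indicator {0<..<c} y * y powr (a - 1) * (c - y) powr (b - 1)) \<partial>lborel)
       = ennreal (c powr (a + b - 1) * Beta a b)"
proof -
  have hi: "((\<lambda>t. t powr (a - 1) * (1 - t) powr (b - 1)) has_integral Beta a b) {0<..<1}"
    using has_integral_Beta_real[OF a b] by (simp add: has_integral_Icc_iff_Ioo)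
  have B: "(\<integral>\<^sup>+t. ennreal (indicator {0<..<1} t * (t powr (a - 1) * (1 - t) powr (b - 1))) \<partial>lborel) = ennreal (Beta a b)"
    by (rule nn_integral_has_integral_lebesgue[OF _ hi]) auto
  have "(\<integral>\<^sup>+y. ennreal (indicator {0<..<c} y * y powr (a - 1) * (c - y) powr (b - 1)) \<partial>lborel)
     = ennreal \<bar>c\<bar> * (\<integral>\<^sup>+x. ennreal (indicator {0<..<c} (0 + c * x) * (0 + c * x) powr (a - 1) * (c - (0 + c * x)) powr (b - 1)) \<partial>lborel)"
    by (rule nn_integral_real_affine) (use c in auto)
  also have "(\<lambda>x. ennreal (indicator {0<..<c} (0 + c * x) * (0 + c * x) powr (a - 1) * (c - (0 + c * x)) powr (b - 1)))
      = (\<lambda>x. ennreal (c powr (a + b - 2)) * ennreal (indicator {0<..<1} x * (x powr (a - 1) * (1 - x) powr (b - 1))))"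
  proof
    fix x :: real
    show "ennreal (indicator {0<..<c} (0 + c * x) * (0 + c * x) powr (a - 1) * (c - (0 + c * x)) powr (b - 1))
        = ennreal (c powr (a + b - 2)) * ennreal (indicator {0<..<1} x * (x powr (a - 1) * (1 - x) powr (b - 1)))"
    proof (cases "0 < x \<and> x < 1")
      case True
      have cx: "c - c * x = c * (1 - x)" by (simp add: algebra_simps)
      have "(c * x) powr (a - 1) * (c * (1 - x)) powr (b - 1) = c powr (a + b - 2) * (x powr (a - 1) * (1 - x) powr (b - 1))"
        using True c by (simp add: powr_mult powr_add[symmetric] mult_ac)
      moreover have "0 < c * x" "c * x < c" using True c by auto
      ultimately show ?thesis using True c
        by (simp add: indicator_def cx ennreal_mult'[symmetric])
    next
      case False
      hence "\<not> (0 < c * x \<and> c * x < c)" using c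
        by (auto simp: mult_less_cancel_left2 zero_less_mult_iff)
      thus ?thesis using False by (auto simp: indicator_def)
    qed
  qed
  also have "ennreal \<bar>c\<bar> * (\<integral>\<^sup>+x. ennreal (c powr (a + b - 2)) * ennreal (indicator {0<..<1} x * (x powr (a - 1) * (1 - x) powr (b - 1))) \<partial>lborel)
      = ennreal c * (ennreal (c powr (a + b - 2)) * ennreal (Beta a b))"
    using c by (subst nn_integral_cmult) (auto simp: B)
  also have "\<dots> = ennreal (c powr (a + b - 1) * Beta a b)"
  proof -
    have "c * c powr (a + b - 2) = c powr (a + b - 1)"
      using c by (simp add: powr_add[symmetric] powr_mult_base)
    moreover have "Beta a b \<ge> 0" using a b by (simp add: Beta_def Gamma_real_pos less_imp_le)
    ultimately show ?thesis using c
      by (simp add: ennreal_mult'[symmetric] ennreal_mult[symmetric] mult.assoc[symmetric])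
  qed
  finally show ?thesis .
qed

definition sdens :: "nat set \<Rightarrow> (nat \<Rightarrow> real) \<Rightarrow> real \<Rightarrow> (nat \<Rightarrow> real) \<Rightarrow> real" where
  "sdens T a b x = (if (\<forall>i\<in>T. 0 < x i) \<and> (\<Sum>i\<in>T. x i) < 1
     then (\<Prod>i\<in>T. x i powr (a i - 1)) * (1 - (\<Sum>i\<in>T. x i)) powr (b - 1) else 0)"

lemma sdens_nonneg: "sdens T a b x \<ge> 0"
  unfolding sdens_def by (auto intro!: prod_nonneg mult_nonneg_nonneg)

lemma sdens_measurable[measurable]:
  assumes "finite T"
  shows "sdens T a b \<in> borel_measurable (Pi\<^sub>M T (\<lambda>_. lborel))"
  unfolding sdens_def using assms by measurable

lemma sdens_integral:
  assumes "finite T" "\<forall>i\<in>T. 0 < a i" "0 < b"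
  shows "(\<integral>\<^sup>+x. ennreal (sdens T a b x) \<partial>Pi\<^sub>M T (\<lambda>_. lborel))
       = ennreal ((\<Prod>i\<in>T. Gamma (a i)) * Gamma b / Gamma (sum a T + b))"
  using assms
proof (induction T arbitrary: b rule: finite_induct)
  case empty
  have "Gamma b \<noteq> 0" using empty.prems Gamma_real_pos[of b] by (simp del: Gamma_real_pos)
  thus ?case by (simp add: PiM_empty sdens_def)
next
  case (insert i T)
  interpret product_sigma_finite "\<lambda>_. lborel" by standard
  have ai: "0 < a i" using insert.prems by auto
  have inner: "(\<integral>\<^sup>+y. ennreal (sdens (insert i T) a b (x(i := y))) \<partial>lborel)
      = ennreal (sdens T a (a i + b) x * Beta (a i) b)" for x
  proof -
    have xs: "(\<Sum>j\<in>T. (x(i := y)) j) = (\<Sum>j\<in>T. x j)" for y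
      using insert.hyps by (intro sum.cong) auto
    have xp: "(\<Prod>j\<in>T. (x(i := y)) j powr (a j - 1)) = (\<Prod>j\<in>T. x j powr (a j - 1))" for y
      using insert.hyps by (intro prod.cong) auto
    define \<sigma> where "\<sigma> = (\<Sum>j\<in>T. x j)"
    define p where "p = (\<Prod>j\<in>T. x j powr (a j - 1))"
    have eq: "sdens (insert i T) a b (x(i := y)) =
       (if (\<forall>j\<in>T. 0 < x j) then indicator {0<..<1 - \<sigma>} y * p * (y powr (a i - 1) * ((1 - \<sigma>) - y) powr (b - 1)) else 0)" for y
    proof -
      have "(\<forall>j\<in>insert i T. 0 < (x(i := y)) j) \<longleftrightarrow> 0 < y \<and> (\<forall>j\<in>T. 0 < x j)"
        using insert.hyps by auto
      moreover have "(\<Sum>j\<in>insert i T. (x(i := y)) j) = y + \<sigma>"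
        using insert.hyps xs[of y] by (simp add: \<sigma>_def del: fun_upd_apply) simp
      moreover have "(\<Prod>j\<in>insert i T. (x(i := y)) j powr (a j - 1)) = y powr (a i - 1) * p"
        using insert.hyps xp[of y] by (simp add: p_def del: fun_upd_apply) simp
      ultimately show ?thesis unfolding sdens_def
        by (auto simp: indicator_def algebra_simps)
    qed
    show ?thesis
    proof (cases "(\<forall>j\<in>T. 0 < x j) \<and> \<sigma> < 1")
      case True
      have p0: "p \<ge> 0" unfolding p_def by (auto intro!: prod_nonneg)
      have "(\<integral>\<^sup>+y. ennreal (sdens (insert i T) a b (x(i := y))) \<partial>lborel)
          = (\<integral>\<^sup>+y. ennreal p * ennreal (indicator {0<..<1 - \<sigma>} y * y powr (a i - 1) * ((1 - \<sigma>) - y) powr (b - 1)) \<partial>lborel)"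
        unfolding eq using True p0 by (intro nn_integral_cong) (auto simp: ennreal_mult'[symmetric] mult_ac)
      also have "\<dots> = ennreal p * ennreal ((1 - \<sigma>) powr (a i + b - 1) * Beta (a i) b)"
        using True ai insert.prems by (subst nn_integral_cmult) (auto simp: beta_scaled)
      also have "\<dots> = ennreal (sdens T a (a i + b) x * Beta (a i) b)"
        using True p0 by (simp add: sdens_def p_def \<sigma>_def ennreal_mult'[symmetric] mult_ac)
      finally show ?thesis .
    next
      case False
      have "(\<integral>\<^sup>+y. ennreal (sdens (insert i T) a b (x(i := y))) \<partial>lborel) = (\<integral>\<^sup>+y. 0 \<partial>(lborel::real measure))"
        unfolding eq using False by (intro nn_integral_cong) (auto simp: indicator_def)
      moreover have "sdens T a (a i + b) x = 0" using False unfolding sdens_def \<sigma>_def by auto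
      ultimately show ?thesis by (simp del: fun_upd_apply)
    qed
  qed
  have "(\<integral>\<^sup>+x. ennreal (sdens (insert i T) a b x) \<partial>Pi\<^sub>M (insert i T) (\<lambda>_. lborel))
      = (\<integral>\<^sup>+x. (\<integral>\<^sup>+y. ennreal (sdens (insert i T) a b (x(i := y))) \<partial>lborel) \<partial>Pi\<^sub>M T (\<lambda>_. lborel))"
    by (rule product_nn_integral_insert) (use insert.hyps in auto)
  also have "\<dots> = (\<integral>\<^sup>+x. ennreal (sdens T a (a i + b) x) * ennreal (Beta (a i) b) \<partial>Pi\<^sub>M T (\<lambda>_. lborel))"
  proof -
    have "Beta (a i) b \<ge> 0" using ai insert.prems by (simp add: Beta_def Gamma_real_pos less_imp_le)
    thus ?thesis unfolding inner by (simp add: ennreal_mult sdens_nonneg)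
  qed
  also have "\<dots> = ennreal ((\<Prod>j\<in>T. Gamma (a j)) * Gamma (a i + b) / Gamma (sum a T + (a i + b))) * ennreal (Beta (a i) b)"
    using insert ai by (subst nn_integral_multc) auto
  also have "\<dots> = ennreal ((\<Prod>j\<in>insert i T. Gamma (a j)) * Gamma b / Gamma (sum a (insert i T) + b))"
  proof -
    have "Gamma (a i + b) \<noteq> 0" using ai insert.prems Gamma_real_pos[of "a i + b"] by (simp del: Gamma_real_pos)
    moreover have "(\<Prod>j\<in>T. Gamma (a j)) \<ge> 0" using insert.prems by (intro prod_nonneg less_imp_le[OF Gamma_real_pos]) auto
    moreover have "Gamma (sum a T + (a i + b)) > 0"
      using insert.prems ai by (intro Gamma_real_pos add_nonneg_pos sum_nonneg) (auto intro: less_imp_le)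
    moreover have "Gamma (a i + b) > 0" "Gamma (a i) > 0" "Gamma b > 0" using insert.prems ai by (auto intro: Gamma_real_pos)
    ultimately show ?thesis using insert.hyps
      by (simp add: Beta_def ennreal_mult'[symmetric] field_simps)
  qed
  finally show ?case .
qed



lemma pochhammer_Gamma_real:
  fixes z :: real assumes "z > 0"
  shows "pochhammer z n = Gamma (z + of_nat n) / Gamma z"
proof (rule pochhammer_Gamma)
  show "z \<notin> \<int>\<^sub>\<le>\<^sub>0" using assms nonpos_Ints_nonpos by fastforce
qed

lemma dirichlet_density_measurable:
  assumes "finite S"
  shows "dirichlet_density \<alpha> S m \<in> borel_measurable (Pi\<^sub>M (S - {m}) (\<lambda>_. lborel))"
  unfolding dirichlet_density_def using assms by measurable

lemma dirichlet_density_nonneg: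
  assumes "finite S" "\<forall>i\<in>S. 0 < \<alpha> i"
  shows "0 \<le> dirichlet_density \<alpha> S m x"
proof -
  have "0 \<le> Gamma (\<Sum>i\<in>S. \<alpha> i)"
  proof (cases "S = {}")
    case False
    hence "0 < (\<Sum>i\<in>S. \<alpha> i)" using assms by (intro sum_pos) auto
    thus ?thesis by (simp add: less_imp_le)
  qed simp
  moreover have "0 \<le> (\<Prod>i\<in>S. Gamma (\<alpha> i))" using assms by (intro prod_nonneg) (auto intro: less_imp_le)
  ultimately show ?thesis unfolding dirichlet_density_def
    by (auto intro!: mult_nonneg_nonneg divide_nonneg_nonneg prod_nonneg)
qed

lemma dirichlet_moment:
  fixes X :: "'w \<Rightarrow> nat \<Rightarrow> real"
  assumes M: "prob_space M" and D: "has_dirichlet M X N \<alpha>" and sa: "(\<Sum>c<N. \<alpha> c) = \<beta>"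
    and Xm: "\<And>c. c < N \<Longrightarrow> (\<lambda>\<omega>. X \<omega> c) \<in> borel_measurable M"
  shows "(\<integral>\<omega>. (\<Prod>c<N. X \<omega> c ^ n c) \<partial>M) = (\<Prod>c<N. pochhammer (\<alpha> c) (n c)) / pochhammer \<beta> (\<Sum>c<N. n c)"
proof -
  interpret prob_space M by fact
  define S where "S = {i\<in>{..<N}. 0 < \<alpha> i}"
  define m where "m = Max S"
  define T where "T = S - {m}"
  have H: "S \<noteq> {}" "\<forall>i<N. 0 \<le> \<alpha> i" "\<forall>i\<in>{..<N} - S. AE \<omega> in M. X \<omega> i = 0"
    "distr M (Pi\<^sub>M T (\<lambda>_. lborel)) (\<lambda>\<omega>. restrict (X \<omega>) T)
         = density (Pi\<^sub>M T (\<lambda>_. lborel)) (\<lambda>x. ennreal (dirichlet_density \<alpha> S m x))"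
    "AE \<omega> in M. X \<omega> m = 1 - (\<Sum>i\<in>T. X \<omega> i)"
    using D unfolding has_dirichlet_def Let_def S_def[symmetric] m_def[symmetric] T_def[symmetric] by auto
  have finS: "finite S" unfolding S_def by auto
  have mS: "m \<in> S" unfolding m_def using finS H(1) by (rule Max_in)
  have SN: "S \<subseteq> {..<N}" unfolding S_def by auto
  have finT: "finite T" using finS by (simp add: T_def)
  have mT: "m \<notin> T" by (simp add: T_def)
  have S_eq: "S = insert m T" using mS by (auto simp: T_def)
  have TS: "T \<subseteq> S" by (auto simp: T_def)
  have apos: "0 < \<alpha> c" if "c \<in> S" for c using that by (auto simp: S_def)
  have a0: "\<alpha> c = 0" if "c < N" "c \<notin> S" for c using that H(2) by (force simp: S_def)
  have beta_eq: "(\<Sum>c\<in>S. \<alpha> c) = \<beta>"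
    unfolding sa[symmetric] by (rule sum.mono_neutral_left) (use a0 SN in auto)
  have bpos: "\<beta> > 0" unfolding beta_eq[symmetric] using finS mS apos
    by (metis H(1) sum_pos)
  have Xmeas[measurable]: "(\<lambda>\<omega>. X \<omega> c) \<in> borel_measurable M" if "c \<in> S" for c using that SN Xm by auto
  have pm: "(\<lambda>\<omega>. \<Prod>c<N. X \<omega> c ^ n c) \<in> borel_measurable M"
    by (rule borel_measurable_prod) (auto intro!: borel_measurable_power Xm)
  show ?thesis
  proof (cases "\<exists>c<N. c \<notin> S \<and> 0 < n c")
    case True
    then obtain c where c: "c < N" "c \<notin> S" "0 < n c" by auto
    have "AE \<omega> in M. X \<omega> c = 0" using H(3) c by auto
    hence "AE \<omega> in M. (\<Prod>c<N. X \<omega> c ^ n c) = 0"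
      by eventually_elim (use c in \<open>auto intro!: prod_zero bexI[of _ c]\<close>)
    hence "(\<integral>\<omega>. (\<Prod>c<N. X \<omega> c ^ n c) \<partial>M) = (\<integral>\<omega>. 0 \<partial>M)"
      by (intro integral_cong_AE) (use pm in auto)
    moreover have "(\<Prod>c<N. pochhammer (\<alpha> c) (n c)) = 0"
      using c a0[of c] by (auto intro!: prod_zero bexI[of _ c] simp: pochhammer_0_left)
    ultimately show ?thesis by simp
  next
    case False
    hence n0: "n c = 0" if "c < N" "c \<notin> S" for c using that by auto
    define g where "g x = (\<Prod>c\<in>T. x c ^ n c) * (1 - (\<Sum>c\<in>T. x c)) ^ n m" for x :: "nat \<Rightarrow> real"
    define C where "C = Gamma (\<Sum>i\<in>S. \<alpha> i) / (\<Prod>i\<in>S. Gamma (\<alpha> i))"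
    have gm[measurable]: "g \<in> borel_measurable (Pi\<^sub>M T (\<lambda>_. lborel))"
      unfolding g_def using finT by measurable
    have resm[measurable]: "(\<lambda>\<omega>. restrict (X \<omega>) T) \<in> measurable M (Pi\<^sub>M T (\<lambda>_. lborel))"
      by (rule measurable_restrict) (use TS in auto)
    have prodS: "(\<Prod>c<N. X \<omega> c ^ n c) = (\<Prod>c\<in>S. X \<omega> c ^ n c)" for \<omega>
      by (rule prod.mono_neutral_right) (use SN n0 in auto)
    have "AE \<omega> in M. (\<Prod>c<N. X \<omega> c ^ n c) = g (restrict (X \<omega>) T)"
      using H(5) by eventually_elim (simp add: prodS S_eq finT mT g_def)
    hence "(\<integral>\<omega>. (\<Prod>c<N. X \<omega> c ^ n c) \<partial>M) = (\<integral>\<omega>. g (restrict (X \<omega>) T) \<partial>M)"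
      by (intro integral_cong_AE) (use pm in auto)
    also have "\<dots> = integral\<^sup>L (distr M (Pi\<^sub>M T (\<lambda>_. lborel)) (\<lambda>\<omega>. restrict (X \<omega>) T)) g"
      by (rule integral_distr[symmetric]) measurable
    also have "\<dots> = integral\<^sup>L (density (Pi\<^sub>M T (\<lambda>_. lborel)) (\<lambda>x. ennreal (dirichlet_density \<alpha> S m x))) g"
      by (simp add: H(4))
    also have "\<dots> = (\<integral>x. dirichlet_density \<alpha> S m x *\<^sub>R g x \<partial>Pi\<^sub>M T (\<lambda>_. lborel))"
      by (rule integral_density) (use finS apos gm dirichlet_density_measurable[OF finS, of \<alpha> m, folded T_def] in \<open>auto intro!: dirichlet_density_nonneg\<close>)
    also have "\<dots> = (\<integral>x. C * sdens T (\<lambda>c. \<alpha> c + n c) (\<alpha> m + n m) x \<partial>Pi\<^sub>M T (\<lambda>_. lborel))"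
    proof (intro Bochner_Integration.integral_cong refl)
      fix x :: "nat \<Rightarrow> real"
      show "dirichlet_density \<alpha> S m x *\<^sub>R g x = C * sdens T (\<lambda>c. \<alpha> c + n c) (\<alpha> m + n m) x"
      proof (cases "(\<forall>i\<in>T. 0 < x i) \<and> (\<Sum>i\<in>T. x i) < 1")
        case True
        have 1: "x c powr (\<alpha> c - 1) * x c ^ n c = x c powr (\<alpha> c + real (n c) - 1)" if "c \<in> T" for c
          using True that by (simp add: powr_realpow[symmetric] powr_add[symmetric] algebra_simps)
        have 2: "(1 - (\<Sum>i\<in>T. x i)) powr (\<alpha> m - 1) * (1 - (\<Sum>i\<in>T. x i)) ^ n m
            = (1 - (\<Sum>i\<in>T. x i)) powr (\<alpha> m + real (n m) - 1)"
          using True by (simp add: powr_realpow[symmetric] powr_add[symmetric] algebra_simps)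
        have "dirichlet_density \<alpha> S m x *\<^sub>R g x
           = C * ((\<Prod>c\<in>T. x c powr (\<alpha> c - 1) * x c ^ n c)
               * ((1 - (\<Sum>i\<in>T. x i)) powr (\<alpha> m - 1) * (1 - (\<Sum>i\<in>T. x i)) ^ n m))"
          using True unfolding dirichlet_density_def g_def C_def T_def[symmetric]
          by (simp add: prod.distrib mult_ac)
        also have "\<dots> = C * sdens T (\<lambda>c. \<alpha> c + n c) (\<alpha> m + n m) x"
          using True unfolding sdens_def 2 by (simp add: 1 cong: prod.cong)
        finally show ?thesis .
      next
        case False
        thus ?thesis unfolding dirichlet_density_def sdens_def T_def[symmetric] by auto
      qed
    qed
    also have "\<dots> = C * (\<integral>x. sdens T (\<lambda>c. \<alpha> c + n c) (\<alpha> m + n m) x \<partial>Pi\<^sub>M T (\<lambda>_. lborel))"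
      by simp
    also have "(\<integral>x. sdens T (\<lambda>c. \<alpha> c + n c) (\<alpha> m + n m) x \<partial>Pi\<^sub>M T (\<lambda>_. lborel))
        = (\<Prod>i\<in>T. Gamma (\<alpha> i + n i)) * Gamma (\<alpha> m + n m) / Gamma ((\<Sum>i\<in>T. \<alpha> i + n i) + (\<alpha> m + n m))"
    proof -
      have "(\<integral>x. sdens T (\<lambda>c. \<alpha> c + n c) (\<alpha> m + n m) x \<partial>Pi\<^sub>M T (\<lambda>_. lborel))
          = enn2real (\<integral>\<^sup>+x. ennreal (sdens T (\<lambda>c. \<alpha> c + n c) (\<alpha> m + n m) x) \<partial>Pi\<^sub>M T (\<lambda>_. lborel))"
        by (rule integral_eq_nn_integral) (use finT in \<open>auto simp: sdens_nonneg\<close>)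
      also have "\<dots> = (\<Prod>i\<in>T. Gamma (\<alpha> i + n i)) * Gamma (\<alpha> m + n m) / Gamma ((\<Sum>i\<in>T. \<alpha> i + n i) + (\<alpha> m + n m))"
      proof -
        have ap: "\<forall>i\<in>T. 0 < \<alpha> i + real (n i)" using apos TS by (auto intro!: add_pos_nonneg)
        have bp: "0 < \<alpha> m + real (n m)" using apos mS by (auto intro!: add_pos_nonneg)
        have sp: "0 < (\<Sum>i\<in>T. \<alpha> i + n i) + (\<alpha> m + n m)"
          using ap bp by (intro add_nonneg_pos[OF sum_nonneg bp]) (auto intro: less_imp_le)
        have nn: "0 \<le> (\<Prod>i\<in>T. Gamma (\<alpha> i + n i)) * Gamma (\<alpha> m + n m) / Gamma ((\<Sum>i\<in>T. \<alpha> i + n i) + (\<alpha> m + n m))"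
          using ap bp sp by (intro divide_nonneg_nonneg mult_nonneg_nonneg prod_nonneg) (auto intro: less_imp_le)
        show ?thesis by (subst sdens_integral[OF finT ap bp]) (simp add: nn)
      qed
      finally show ?thesis .
    qed
    also have "C * ((\<Prod>i\<in>T. Gamma (\<alpha> i + n i)) * Gamma (\<alpha> m + n m) / Gamma ((\<Sum>i\<in>T. \<alpha> i + n i) + (\<alpha> m + n m)))
        = (\<Prod>c<N. pochhammer (\<alpha> c) (n c)) / pochhammer \<beta> (\<Sum>c<N. n c)"
    proof -
      have pS: "(\<Prod>c<N. pochhammer (\<alpha> c) (n c)) = (\<Prod>c\<in>S. pochhammer (\<alpha> c) (n c))"
        by (rule prod.mono_neutral_right) (use SN n0 in auto)
      have nS: "(\<Sum>c<N. n c) = (\<Sum>c\<in>S. n c)"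
        by (rule sum.mono_neutral_right) (use SN n0 in auto)
      have pg: "(\<Prod>c\<in>S. pochhammer (\<alpha> c) (n c)) = (\<Prod>c\<in>S. Gamma (\<alpha> c + n c)) / (\<Prod>c\<in>S. Gamma (\<alpha> c))"
        by (simp add: pochhammer_Gamma_real apos prod_dividef)
      have sumS: "(\<Sum>i\<in>T. \<alpha> i + n i) + (\<alpha> m + n m) = \<beta> + real (\<Sum>c\<in>S. n c)"
        unfolding beta_eq[symmetric] S_eq using finT mT by (simp add: sum.distrib)
      have "Gamma \<beta> > 0" "Gamma (\<beta> + real (\<Sum>c\<in>S. n c)) > 0" using bpos by (auto intro!: Gamma_real_pos add_pos_nonneg simp del: of_nat_sum)
      moreover have "(\<Prod>c\<in>S. Gamma (\<alpha> c)) > 0" by (rule prod_pos) (auto intro: apos)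
      ultimately show ?thesis
        unfolding pS nS pg sumS C_def beta_eq
        by (simp add: pochhammer_Gamma_real[OF bpos] S_eq finT mT field_simps)
    qed
    finally show ?thesis .
  qed
qed

lemma prod_fiber_pow:
  fixes f :: "nat \<Rightarrow> real"
  assumes "finite I" "finite C" "\<sigma> ` I \<subseteq> C"
  shows "(\<Prod>i\<in>I. f (\<sigma> i)) = (\<Prod>c\<in>C. f c ^ card {i\<in>I. \<sigma> i = c})"
proof -
  have "(\<Prod>i\<in>I. f (\<sigma> i)) = (\<Prod>c\<in>C. \<Prod>i\<in>{i\<in>I. \<sigma> i = c}. f (\<sigma> i))"
    by (rule prod.group[symmetric]) (use assms in auto)
  also have "\<dots> = (\<Prod>c\<in>C. f c ^ card {i\<in>I. \<sigma> i = c})"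
  proof (intro prod.cong refl)
    fix c
    have "(\<Prod>i\<in>{i\<in>I. \<sigma> i = c}. f (\<sigma> i)) = (\<Prod>i\<in>{i\<in>I. \<sigma> i = c}. f c)"
      by (rule prod.cong) auto
    thus "(\<Prod>i\<in>{i\<in>I. \<sigma> i = c}. f (\<sigma> i)) = f c ^ card {i\<in>I. \<sigma> i = c}" by simp
  qed
  finally show ?thesis .
qed

lemma sum_fiber_card:
  assumes "finite I" "finite C" "\<sigma> ` I \<subseteq> C"
  shows "(\<Sum>c\<in>C. card {i\<in>I. \<sigma> i = c}) = card I"
proof -
  have "(\<Sum>c\<in>C. card {i\<in>I. \<sigma> i = c}) = (\<Sum>c\<in>C. \<Sum>i\<in>{i\<in>I. \<sigma> i = c}. (1::nat))" by simp
  also have "\<dots> = (\<Sum>i\<in>I. 1)" by (rule sum.group) (use assms in auto)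
  finally show ?thesis by simp
qed

context
  fixes M :: "'w measure" and X :: "'w \<Rightarrow> nat \<Rightarrow> real" and N :: nat and \<alpha> :: "nat \<Rightarrow> real" and \<beta> :: real
  assumes M: "prob_space M" and D: "has_dirichlet M X N \<alpha>" and sa: "(\<Sum>c<N. \<alpha> c) = \<beta>"
    and Xm: "\<And>c. c < N \<Longrightarrow> (\<lambda>\<omega>. X \<omega> c) \<in> borel_measurable M"
    and Xb: "\<And>\<omega> c. \<omega> \<in> space M \<Longrightarrow> c < N \<Longrightarrow> 0 \<le> X \<omega> c \<and> X \<omega> c \<le> 1"
    and bpos: "\<beta> > 0"
begin

definition "cnt I \<sigma> c = card {i\<in>I. \<sigma> i = c}"
definition "mom I \<sigma> = (\<integral>\<omega>. (\<Prod>i\<in>I. X \<omega> (\<sigma> i)) \<partial>M)"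

lemma mom_formula:
  assumes "finite I" "\<sigma> ` I \<subseteq> {..<N}"
  shows "mom I \<sigma> = (\<Prod>c<N. pochhammer (\<alpha> c) (cnt I \<sigma> c)) / pochhammer \<beta> (card I)"
proof -
  have "mom I \<sigma> = (\<integral>\<omega>. (\<Prod>c<N. X \<omega> c ^ cnt I \<sigma> c) \<partial>M)"
    unfolding mom_def cnt_def by (intro Bochner_Integration.integral_cong refl prod_fiber_pow) (use assms in auto)
  also have "\<dots> = (\<Prod>c<N. pochhammer (\<alpha> c) (cnt I \<sigma> c)) / pochhammer \<beta> (\<Sum>c<N. cnt I \<sigma> c)"
    by (rule dirichlet_moment[OF M D sa Xm])
  also have "(\<Sum>c<N. cnt I \<sigma> c) = card I"
    unfolding cnt_def by (rule sum_fiber_card) (use assms in auto)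
  finally show ?thesis .
qed

lemma mom_step:
  assumes "finite I" "x \<notin> I" "\<sigma> ` I \<subseteq> {..<N}" "c < N"
  shows "(\<beta> + card I) * mom (insert x I) (\<sigma>(x := c)) = (\<alpha> c + cnt I \<sigma> c) * mom I \<sigma>"
proof -
  have s': "(\<sigma>(x := c)) ` insert x I \<subseteq> {..<N}" using assms by auto
  have cnt': "cnt (insert x I) (\<sigma>(x := c)) c' = cnt I \<sigma> c' + (if c' = c then 1 else 0)" for c'
  proof -
    have "{i\<in>insert x I. (\<sigma>(x := c)) i = c'} = (if c' = c then insert x {i\<in>I. \<sigma> i = c'} else {i\<in>I. \<sigma> i = c'})"
      using assms(2) by auto
    thus ?thesis unfolding cnt_def using assms(1,2) by auto
  qed
  have P: "(\<Prod>c'<N. pochhammer (\<alpha> c') (cnt (insert x I) (\<sigma>(x := c)) c'))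
      = (\<alpha> c + cnt I \<sigma> c) * (\<Prod>c'<N. pochhammer (\<alpha> c') (cnt I \<sigma> c'))"
  proof -
    have "(\<Prod>c'<N. pochhammer (\<alpha> c') (cnt (insert x I) (\<sigma>(x := c)) c'))
        = pochhammer (\<alpha> c) (Suc (cnt I \<sigma> c)) * (\<Prod>c'\<in>{..<N} - {c}. pochhammer (\<alpha> c') (cnt I \<sigma> c'))"
      using assms(4) by (subst prod.remove[of _ c]) (auto simp: cnt' intro!: prod.cong)
    also have "\<dots> = (\<alpha> c + cnt I \<sigma> c) * (pochhammer (\<alpha> c) (cnt I \<sigma> c) * (\<Prod>c'\<in>{..<N} - {c}. pochhammer (\<alpha> c') (cnt I \<sigma> c')))"
      by (simp add: pochhammer_Suc mult_ac)
    also have "pochhammer (\<alpha> c) (cnt I \<sigma> c) * (\<Prod>c'\<in>{..<N} - {c}. pochhammer (\<alpha> c') (cnt I \<sigma> c')) = (\<Prod>c'<N. pochhammer (\<alpha> c') (cnt I \<sigma> c'))"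
      using assms(4) by (subst prod.remove[of _ c, symmetric]) auto
    finally show ?thesis .
  qed
  have pb: "pochhammer \<beta> (card I) \<noteq> 0" using bpos
    by (metis pochhammer_pos less_irrefl)
  have "(\<beta> + card I) * mom (insert x I) (\<sigma>(x := c))
      = (\<beta> + card I) * ((\<alpha> c + cnt I \<sigma> c) * (\<Prod>c'<N. pochhammer (\<alpha> c') (cnt I \<sigma> c'))) / pochhammer \<beta> (Suc (card I))"
    using assms by (simp add: mom_formula[OF _ s'] P)
  also have "\<dots> = (\<alpha> c + cnt I \<sigma> c) * ((\<Prod>c'<N. pochhammer (\<alpha> c') (cnt I \<sigma> c')) / pochhammer \<beta> (card I))"
  proof -
    have "(\<beta> + card I) * Z / pochhammer \<beta> (Suc (card I)) = Z / pochhammer \<beta> (card I)" for Z :: real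
    proof -
      have "\<beta> + card I > 0" using bpos by (simp add: add_pos_nonneg)
      hence "\<beta> + card I \<noteq> 0" by simp
      thus ?thesis unfolding pochhammer_Suc
        by (subst mult.commute[of "pochhammer \<beta> (card I)"]) (rule nonzero_mult_divide_mult_cancel_left)
    qed
    thus ?thesis by simp
  qed
  also have "\<dots> = (\<alpha> c + cnt I \<sigma> c) * mom I \<sigma>"
    using assms by (simp add: mom_formula)
  finally show ?thesis .
qed


lemma mom_integrable:
  assumes "\<sigma> ` I \<subseteq> {..<N}"
  shows "integrable M (\<lambda>\<omega>. \<Prod>i\<in>I. X \<omega> (\<sigma> i))"
proof -
  interpret prob_space M by (rule M)
  show ?thesis
  proof (rule integrable_const_bound[where B=1])
    show "AE \<omega> in M. norm (\<Prod>i\<in>I. X \<omega> (\<sigma> i)) \<le> 1"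
    proof (rule AE_I2)
      fix \<omega> assume w: "\<omega> \<in> space M"
      have "\<bar>\<Prod>i\<in>I. X \<omega> (\<sigma> i)\<bar> = (\<Prod>i\<in>I. \<bar>X \<omega> (\<sigma> i)\<bar>)" by (rule abs_prod)
      also have "\<dots> \<le> 1" using Xb[OF w] assms by (intro prod_le_1) auto
      finally show "norm (\<Prod>i\<in>I. X \<omega> (\<sigma> i)) \<le> 1" by simp
    qed
    show "(\<lambda>\<omega>. \<Prod>i\<in>I. X \<omega> (\<sigma> i)) \<in> borel_measurable M"
      by (rule borel_measurable_prod) (use assms Xm in auto)
  qed
qed

definition "Gd I J = (\<integral>\<omega>. (\<Prod>i\<in>I. \<Sum>c\<in>J i. X \<omega> c) \<partial>M)"

lemma Gd_expand:
  assumes "finite I" "\<And>i. i \<in> I \<Longrightarrow> J i \<subseteq> {..<N}"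
  shows "Gd I J = (\<Sum>\<sigma>\<in>Pi\<^sub>E I J. mom I \<sigma>)"
proof -
  have fJ: "finite (J i)" if "i \<in> I" for i using assms(2)[OF that] finite_subset by blast
  have "Gd I J = (\<integral>\<omega>. (\<Sum>\<sigma>\<in>Pi\<^sub>E I J. \<Prod>i\<in>I. X \<omega> (\<sigma> i)) \<partial>M)"
    unfolding Gd_def by (intro Bochner_Integration.integral_cong refl prod_sum_PiE assms(1) fJ)
  also have "\<dots> = (\<Sum>\<sigma>\<in>Pi\<^sub>E I J. mom I \<sigma>)"
    unfolding mom_def
  proof (rule Bochner_Integration.integral_sum)
    fix \<sigma> assume "\<sigma> \<in> Pi\<^sub>E I J"
    hence "\<sigma> ` I \<subseteq> {..<N}" using assms(2) by (auto simp: PiE_def Pi_def)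
    thus "integrable M (\<lambda>\<omega>. \<Prod>i\<in>I. X \<omega> (\<sigma> i))" by (rule mom_integrable)
  qed
  finally show ?thesis .
qed

lemma Gd_rec:
  assumes I: "finite I" "x \<notin> I" and J: "\<And>i. i \<in> insert x I \<Longrightarrow> J i \<subseteq> {..<N}"
  shows "(\<beta> + card I) * Gd (insert x I) J = (\<Sum>c\<in>J x. \<alpha> c) * Gd I J + (\<Sum>j\<in>I. Gd I (J(j := J j \<inter> J x)))"
proof -
  have fJ: "finite (J i)" if "i \<in> insert x I" for i using J[OF that] finite_subset by blast
  have finPi: "finite (Pi\<^sub>E I J)" using I fJ by (intro finite_PiE) auto
  have sig: "\<sigma> ` I \<subseteq> {..<N}" if "\<sigma> \<in> Pi\<^sub>E I J" for \<sigma> using that J by (auto simp: PiE_def Pi_def)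
  have "Gd (insert x I) J = (\<Sum>\<sigma>\<in>Pi\<^sub>E (insert x I) J. mom (insert x I) \<sigma>)"
    by (rule Gd_expand) (use I J in auto)
  also have "\<dots> = (\<Sum>p\<in>J x \<times> Pi\<^sub>E I J. mom (insert x I) ((\<lambda>(y, g). g(x := y)) p))"
    unfolding PiE_insert_eq by (rule sum.reindex[OF inj_combinator[OF I(2)], unfolded comp_def])
  also have "\<dots> = (\<Sum>c\<in>J x. \<Sum>\<sigma>\<in>Pi\<^sub>E I J. mom (insert x I) (\<sigma>(x := c)))"
    by (subst sum.cartesian_product) (simp add: case_prod_unfold)
  finally have "(\<beta> + card I) * Gd (insert x I) J = (\<Sum>c\<in>J x. \<Sum>\<sigma>\<in>Pi\<^sub>E I J. (\<beta> + card I) * mom (insert x I) (\<sigma>(x := c)))"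
    by (simp add: sum_distrib_left)
  also have "\<dots> = (\<Sum>c\<in>J x. \<Sum>\<sigma>\<in>Pi\<^sub>E I J. (\<alpha> c + cnt I \<sigma> c) * mom I \<sigma>)"
    by (intro sum.cong refl mom_step I sig) (use J in auto)
  also have "\<dots> = (\<Sum>\<sigma>\<in>Pi\<^sub>E I J. (\<Sum>c\<in>J x. \<alpha> c) * mom I \<sigma> + real (\<Sum>c\<in>J x. cnt I \<sigma> c) * mom I \<sigma>)"
    by (subst sum.swap) (simp add: sum.distrib distrib_right sum_distrib_right)
  also have "\<dots> = (\<Sum>c\<in>J x. \<alpha> c) * Gd I J + (\<Sum>\<sigma>\<in>Pi\<^sub>E I J. \<Sum>j\<in>I. (if \<sigma> j \<in> J x then mom I \<sigma> else 0))"
  proof -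
    have "(\<Sum>c\<in>J x. cnt I \<sigma> c) = (\<Sum>j\<in>I. (if \<sigma> j \<in> J x then 1 else 0))" for \<sigma>
    proof -
      have "(\<Sum>c\<in>J x. cnt I \<sigma> c) = (\<Sum>c\<in>J x. \<Sum>i\<in>{i\<in>{i\<in>I. \<sigma> i \<in> J x}. \<sigma> i = c}. (1::nat))"
        unfolding cnt_def by (intro sum.cong refl) (auto intro!: arg_cong[where f=card])
      also have "\<dots> = (\<Sum>i\<in>{i\<in>I. \<sigma> i \<in> J x}. 1)"
        by (rule sum.group) (use I fJ in auto)
      also have "\<dots> = (\<Sum>j\<in>I. (if \<sigma> j \<in> J x then 1 else 0))"
        by (rule sum.inter_filter[OF I(1)])
      finally show ?thesis .
    qed
    hence "real (\<Sum>c\<in>J x. cnt I \<sigma> c) * mom I \<sigma> = (\<Sum>j\<in>I. (if \<sigma> j \<in> J x then mom I \<sigma> else 0))" for \<sigma>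
      by (simp add: sum_distrib_right of_nat_sum) (intro sum.cong refl, auto)
    thus ?thesis
      using Gd_expand[of I J] I J by (simp add: sum.distrib sum_distrib_left)
  qed
  also have "(\<Sum>\<sigma>\<in>Pi\<^sub>E I J. \<Sum>j\<in>I. (if \<sigma> j \<in> J x then mom I \<sigma> else 0)) = (\<Sum>j\<in>I. Gd I (J(j := J j \<inter> J x)))"
  proof -
    have "(\<Sum>\<sigma>\<in>Pi\<^sub>E I J. \<Sum>j\<in>I. (if \<sigma> j \<in> J x then mom I \<sigma> else 0))
        = (\<Sum>j\<in>I. \<Sum>\<sigma>\<in>Pi\<^sub>E I J. (if \<sigma> j \<in> J x then mom I \<sigma> else 0))"
      by (rule sum.swap)
    also have "\<dots> = (\<Sum>j\<in>I. Gd I (J(j := J j \<inter> J x)))"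
    proof (rule sum.cong[OF refl])
      fix j assume j: "j \<in> I"
      have "(\<Sum>\<sigma>\<in>Pi\<^sub>E I J. (if \<sigma> j \<in> J x then mom I \<sigma> else 0)) = (\<Sum>\<sigma>\<in>{\<sigma>\<in>Pi\<^sub>E I J. \<sigma> j \<in> J x}. mom I \<sigma>)"
        by (rule sum.inter_filter[OF finPi, symmetric])
      also have "{\<sigma>\<in>Pi\<^sub>E I J. \<sigma> j \<in> J x} = Pi\<^sub>E I (J(j := J j \<inter> J x))"
        using j by (auto simp: PiE_def Pi_def)
      also have "(\<Sum>\<sigma>\<in>Pi\<^sub>E I (J(j := J j \<inter> J x)). mom I \<sigma>) = Gd I (J(j := J j \<inter> J x))"
        by (rule Gd_expand[symmetric]) (use I J j in auto)
      finally show "(\<Sum>\<sigma>\<in>Pi\<^sub>E I J. (if \<sigma> j \<in> J x then mom I \<sigma> else 0)) = Gd I (J(j := J j \<inter> J x))" .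
    qed
    finally show ?thesis .
  qed
  finally show ?thesis .
qed
end

lemma beta_one_dens_meas[measurable]:
  "(\<lambda>x. ennreal (indicator {0<..<1} x * \<theta> * (1 - x) powr (\<theta> - 1))) \<in> borel_measurable lborel"
  by measurable

lemma sets_beta_one[simp, measurable_cong]: "sets (beta_one \<theta>) = sets borel"
  by (simp add: beta_one_def)

lemma space_beta_one[simp]: "space (beta_one \<theta>) = UNIV"
  by (simp add: beta_one_def)

lemma beta_one_nn_integral:
  fixes R T :: nat and \<theta> :: real
  assumes tpos: "\<theta> > 0"
  shows "(\<integral>\<^sup>+y. ennreal (indicator {0..1} y * y ^ R * (1 - y) ^ T) \<partial>beta_one \<theta>)
       = ennreal (\<theta> * fact R / pochhammer (\<theta> + T) (Suc R))"
proof -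
  have "(\<integral>\<^sup>+y. ennreal (indicator {0..1} y * y ^ R * (1 - y) ^ T) \<partial>beta_one \<theta>)
      = (\<integral>\<^sup>+y. ennreal (indicator {0<..<1} y * \<theta> * (1 - y) powr (\<theta> - 1)) * ennreal (indicator {0..1} y * y ^ R * (1 - y) ^ T) \<partial>lborel)"
    unfolding beta_one_def by (rule nn_integral_density) measurable
  also have "\<dots> = (\<integral>\<^sup>+y. ennreal \<theta> * ennreal (indicator {0<..<1} y * y powr (real (Suc R) - 1) * (1 - y) powr ((\<theta> + T) - 1)) \<partial>lborel)"
  proof (intro nn_integral_cong)
    fix y :: real
    show "ennreal (indicator {0<..<1} y * \<theta> * (1 - y) powr (\<theta> - 1)) * ennreal (indicator {0..1} y * y ^ R * (1 - y) ^ T)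
        = ennreal \<theta> * ennreal (indicator {0<..<1} y * y powr (real (Suc R) - 1) * (1 - y) powr ((\<theta> + T) - 1))"
    proof (cases "0 < y \<and> y < 1")
      case True
      have "(1 - y) powr (\<theta> - 1) * (1 - y) ^ T = (1 - y) powr ((\<theta> + T) - 1)"
        using True by (simp add: powr_realpow[symmetric] powr_add[symmetric] algebra_simps)
      moreover have "y ^ R = y powr (real (Suc R) - 1)" using True by (simp add: powr_realpow)
      ultimately show ?thesis using True tpos
        by (simp add: indicator_def ennreal_mult'[symmetric] mult_ac)
    qed (auto simp: indicator_def)
  qed
  also have "\<dots> = ennreal \<theta> * ennreal (1 powr (real (Suc R) + (\<theta> + T) - 1) * Beta (real (Suc R)) (\<theta> + T))"
    using tpos by (subst nn_integral_cmult) (auto simp: beta_scaled add_pos_nonneg simp del: of_nat_Suc)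
  also have "\<dots> = ennreal (\<theta> * fact R / pochhammer (\<theta> + T) (Suc R))"
  proof -
    have tp: "\<theta> + T > 0" using tpos by (simp add: add_pos_nonneg)
    have "Beta (real (Suc R)) (\<theta> + T) = fact R / pochhammer (\<theta> + T) (Suc R)"
    proof -
      have "Gamma (real (Suc R)) = fact R" using Gamma_fact[of R] by (simp add: add.commute)
      moreover have "pochhammer (\<theta> + T) (Suc R) = Gamma (\<theta> + T + real (Suc R)) / Gamma (\<theta> + T)"
        by (rule pochhammer_Gamma_real[OF tp])
      moreover have "Gamma (\<theta> + T) > 0" "Gamma (\<theta> + T + real (Suc R)) > 0"
        using tp by (auto intro!: Gamma_real_pos add_pos_nonneg simp del: of_nat_Suc)
      moreover have "pochhammer (\<theta> + T) (Suc R) > 0" using tp by (rule pochhammer_pos)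
      ultimately show ?thesis by (simp add: Beta_def field_simps add_ac)
    qed
    moreover have "Beta (real (Suc R)) (\<theta> + T) \<ge> 0"
      using tp by (simp add: Beta_def less_imp_le del: of_nat_Suc)
    ultimately show ?thesis using tpos by (simp add: ennreal_mult'[symmetric])
  qed
  finally show ?thesis .
qed

lemma beta_one_prob:
  assumes "\<theta> > 0" shows "prob_space (beta_one \<theta>)"
proof
  have "emeasure (beta_one \<theta>) (space (beta_one \<theta>)) = (\<integral>\<^sup>+y. ennreal (indicator {0..1} y * y ^ 0 * (1 - y) ^ 0) \<partial>beta_one \<theta>)"
  proof -
    have "emeasure (beta_one \<theta>) (space (beta_one \<theta>)) = emeasure (beta_one \<theta>) {0..1}"
    proof -
      have "emeasure (beta_one \<theta>) (space (beta_one \<theta>)) = (\<integral>\<^sup>+x. ennreal (indicator {0<..<1} x * \<theta> * (1 - x) powr (\<theta> - 1)) * indicator UNIV x \<partial>lborel)"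
        unfolding beta_one_def by (subst emeasure_density) auto
      also have "\<dots> = (\<integral>\<^sup>+x. ennreal (indicator {0<..<1} x * \<theta> * (1 - x) powr (\<theta> - 1)) * indicator {0..1} x \<partial>lborel)"
        by (intro nn_integral_cong) (auto simp: indicator_def)
      also have "\<dots> = emeasure (beta_one \<theta>) {0..1}"
        unfolding beta_one_def by (subst emeasure_density) auto
      finally show ?thesis .
    qed
    also have "\<dots> = (\<integral>\<^sup>+y. indicator {0..1} y \<partial>beta_one \<theta>)" by simp
    also have "\<dots> = (\<integral>\<^sup>+y. ennreal (indicator {0..1} y * y ^ 0 * (1 - y) ^ 0) \<partial>beta_one \<theta>)"
      by (intro nn_integral_cong) (auto simp: indicator_def)
    finally show ?thesis .
  qed
  also have "\<dots> = 1" using assms by (subst beta_one_nn_integral) auto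
  finally show "emeasure (beta_one \<theta>) (space (beta_one \<theta>)) = 1" .
qed

lemma beta_one_restrict:
  assumes "A \<in> sets borel"
  shows "emeasure (beta_one \<theta>) (A \<inter> {0..1}) = emeasure (beta_one \<theta>) A"
  unfolding beta_one_def using assms
  by (subst (1 2) emeasure_density) (auto intro!: nn_integral_cong simp: indicator_def)



context
  fixes M :: "'w measure" and \<nu> :: "'w \<Rightarrow> real measure" and \<beta> \<theta> :: real
  assumes M: "prob_space M" and bpos: "\<beta> > 0" and tpos: "\<theta> > 0"
    and DP: "dirichlet_process M \<nu> \<beta> (beta_one \<theta>)"
begin

lemma nu_meas: "\<nu> \<in> measurable M (prob_algebra borel)"
  using DP by (simp add: dirichlet_process_def)

lemma nu_prob: "\<omega> \<in> space M \<Longrightarrow> prob_space (\<nu> \<omega>)"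
  using measurable_space[OF nu_meas] by (auto simp: space_prob_algebra)

lemma nu_sets: "\<omega> \<in> space M \<Longrightarrow> sets (\<nu> \<omega>) = sets borel"
  using measurable_space[OF nu_meas] by (auto simp: space_prob_algebra)

lemma nuA_meas: "A \<in> sets borel \<Longrightarrow> (\<lambda>\<omega>. measure (\<nu> \<omega>) A) \<in> borel_measurable M"
  by (rule measurable_compose[OF nu_meas measurable_measure_prob_algebra])

lemma nu_bounds: "\<omega> \<in> space M \<Longrightarrow> 0 \<le> measure (\<nu> \<omega>) A \<and> measure (\<nu> \<omega>) A \<le> 1"
  using prob_space.prob_le_1[OF nu_prob] by auto

lemma nu_finite_Union:
  assumes "\<omega> \<in> space M" "finite S" "\<And>c. c \<in> S \<Longrightarrow> C c \<in> sets borel" "disjoint_family_on C S"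
  shows "measure (\<nu> \<omega>) (\<Union>c\<in>S. C c) = (\<Sum>c\<in>S. measure (\<nu> \<omega>) (C c))"
proof -
  interpret prob_space "\<nu> \<omega>" by (rule nu_prob[OF assms(1)])
  show ?thesis by (rule measure_finite_Union) (use assms nu_sets[OF assms(1)] in auto)
qed

lemma mu_finite_Union:
  assumes "finite S" "\<And>c. c \<in> S \<Longrightarrow> C c \<in> sets borel" "disjoint_family_on C S"
  shows "measure (beta_one \<theta>) (\<Union>c\<in>S. C c) = (\<Sum>c\<in>S. measure (beta_one \<theta>) (C c))"
proof -
  interpret prob_space "beta_one \<theta>" by (rule beta_one_prob[OF tpos])
  show ?thesis by (rule measure_finite_Union) (use assms in auto)
qed

definition "Gs I B = (\<integral>\<omega>. (\<Prod>j\<in>I. measure (\<nu> \<omega>) (B j \<inter> {0..1})) \<partial>M)"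
definition "hB B A = \<beta> * measure (beta_one \<theta>) ((\<Inter>j\<in>A. B j) \<inter> {0..1})"

lemma Gs_rec:
  assumes I: "finite I" "x \<notin> I" and B: "\<And>j. B j \<in> sets borel"
  shows "(\<beta> + card I) * Gs (insert x I) B = hB B {x} * Gs I B + (\<Sum>j\<in>I. Gs I (B(j := B j \<inter> B x)))"
proof -
  define K where "K = insert x I"
  have finK: "finite K" using I by (simp add: K_def)
  define N where "N = card (Pow K)"
  obtain hh where hh: "bij_betw hh {0..<N} (Pow K)"
    using ex_bij_betw_nat_finite[of "Pow K"] finK by (auto simp: N_def)
  have hhK: "hh c \<subseteq> K" if "c < N" for c using hh that by (auto simp: bij_betw_def)
  have hh_inj: "hh c = hh c' \<Longrightarrow> c < N \<Longrightarrow> c' < N \<Longrightarrow> c = c'" for c c'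
    using hh by (auto simp: bij_betw_def inj_on_def)
  have hh_surj: "\<exists>c<N. hh c = L" if "L \<subseteq> K" for L
  proof -
    have "L \<in> hh ` {0..<N}" using hh that by (auto simp: bij_betw_def)
    thus ?thesis by auto
  qed
  define cell where "cell c = {0..1} \<inter> {y. {j\<in>K. y \<in> B j} = hh c}" for c
  have cell_alt: "cell c = {0..1} \<inter> (\<Inter>j\<in>K. if j \<in> hh c then B j else UNIV - B j)" if "c < N" for c
  proof -
    have "({j\<in>K. y \<in> B j} = hh c) \<longleftrightarrow> (\<forall>j\<in>K. (y \<in> B j \<longleftrightarrow> j \<in> hh c))" for y
      using hhK[OF that] by blast
    hence "y \<in> cell c \<longleftrightarrow> y \<in> {0..1} \<inter> (\<Inter>j\<in>K. if j \<in> hh c then B j else UNIV - B j)" for y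
      unfolding cell_def by auto
    thus ?thesis by blast
  qed
  have cell_borel: "cell c \<in> sets borel" if "c < N" for c
    unfolding cell_alt[OF that] using finK B by (intro sets.Int sets.finite_INT) (auto simp: K_def)
  have cell_disj: "disjoint_family_on cell {..<N}"
    unfolding disjoint_family_on_def cell_def using hh_inj by auto
  define J' where "J' L = {c\<in>{..<N}. L \<subseteq> hh c}" for L
  have cell_union: "(\<Inter>j\<in>L. B j) \<inter> {0..1} = (\<Union>c\<in>J' L. cell c)" if "L \<subseteq> K" for L
  proof (intro equalityI subsetI)
    fix y assume y: "y \<in> (\<Inter>j\<in>L. B j) \<inter> {0..1}"
    obtain c where c: "c < N" "hh c = {j\<in>K. y \<in> B j}" using hh_surj[of "{j\<in>K. y \<in> B j}"] by auto
    have "c \<in> J' L" using c y that by (auto simp: J'_def)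
    moreover have "y \<in> cell c" using c y by (auto simp: cell_def)
    ultimately show "y \<in> (\<Union>c\<in>J' L. cell c)" by auto
  next
    fix y assume "y \<in> (\<Union>c\<in>J' L. cell c)"
    then obtain c where "c \<in> J' L" "y \<in> cell c" by auto
    thus "y \<in> (\<Inter>j\<in>L. B j) \<inter> {0..1}" using that by (auto simp: J'_def cell_def)
  qed
  have allcells: "(\<Union>c<N. cell c) = {0..1}"
    using cell_union[of "{}"] unfolding J'_def by (simp add: lessThan_def)
  have Npos: "N > 0" unfolding N_def using finK by (auto simp: card_gt_0_iff)
  define X where "X \<omega> c = measure (\<nu> \<omega>) (cell c)" for \<omega> c
  define \<alpha> where "\<alpha> c = \<beta> * measure (beta_one \<theta>) (cell c)" for c
  have D: "has_dirichlet M X N \<alpha>"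
    using DP Npos cell_borel cell_disj allcells unfolding dirichlet_process_def X_def \<alpha>_def by auto
  have mu01: "measure (beta_one \<theta>) {0..1} = 1"
  proof -
    interpret prob_space "beta_one \<theta>" by (rule beta_one_prob[OF tpos])
    have "emeasure (beta_one \<theta>) (UNIV \<inter> {0..1}) = emeasure (beta_one \<theta>) UNIV"
      by (rule beta_one_restrict) simp
    thus ?thesis using emeasure_space_1 by (simp add: measure_def)
  qed
  have sa: "(\<Sum>c<N. \<alpha> c) = \<beta>"
    unfolding \<alpha>_def sum_distrib_left[symmetric]
    using mu_finite_Union[of "{..<N}" cell] cell_borel cell_disj allcells mu01 by simp
  have Xm: "(\<lambda>\<omega>. X \<omega> c) \<in> borel_measurable M" if "c < N" for c
    unfolding X_def by (rule nuA_meas[OF cell_borel[OF that]])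
  have Xb: "0 \<le> X \<omega> c \<and> X \<omega> c \<le> 1" if "\<omega> \<in> space M" for \<omega> c
    unfolding X_def by (rule nu_bounds[OF that])
  have J'sub: "J' L \<subseteq> {..<N}" for L by (auto simp: J'_def)
  have J'fin: "finite (J' L)" for L using J'sub finite_subset by blast
  have link: "Gs I' B' = Gd M X I' J''" if "\<And>i. i \<in> I' \<Longrightarrow> B' i \<inter> {0..1} = (\<Union>c\<in>J'' i. cell c)"
    "\<And>i. i \<in> I' \<Longrightarrow> J'' i \<subseteq> {..<N}" for I' B' J''
  proof -
    have "Gs I' B' = (\<integral>\<omega>. (\<Prod>i\<in>I'. \<Sum>c\<in>J'' i. X \<omega> c) \<partial>M)"
      unfolding Gs_def
    proof (intro Bochner_Integration.integral_cong refl prod.cong)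
      fix \<omega> i assume w: "\<omega> \<in> space M" and i: "i \<in> I'"
      have fin: "finite (J'' i)" using that(2)[OF i] finite_subset by blast
      show "measure (\<nu> \<omega>) (B' i \<inter> {0..1}) = (\<Sum>c\<in>J'' i. X \<omega> c)"
        unfolding that(1)[OF i] X_def
        by (rule nu_finite_Union[OF w fin]) (use that(2)[OF i] cell_borel disjoint_family_on_mono[OF that(2)[OF i] cell_disj] in auto)
    qed
    also have "\<dots> = Gd M X I' J''"
      by (rule Gd_def[OF M D sa Xm Xb bpos, symmetric])
    finally show ?thesis .
  qed
  define J where "J i = J' {i}" for i
  have BJ: "B i \<inter> {0..1} = (\<Union>c\<in>J i. cell c)" if "i \<in> K" for i
    using cell_union[of "{i}"] that by (simp add: J_def)
  have rec: "(\<beta> + card I) * Gd M X (insert x I) J = (\<Sum>c\<in>J x. \<alpha> c) * Gd M X I J + (\<Sum>j\<in>I. Gd M X I (J(j := J j \<inter> J x)))"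
    by (rule Gd_rec[OF M D sa Xm Xb bpos I]) (auto simp: J_def J'_def)
  have e1: "Gs (insert x I) B = Gd M X (insert x I) J"
    by (rule link) (auto simp: BJ K_def J_def J'_def)
  have e2: "Gs I B = Gd M X I J"
    by (rule link) (auto simp: BJ K_def J_def J'_def)
  have e3: "Gs I (B(j := B j \<inter> B x)) = Gd M X I (J(j := J j \<inter> J x))" if j: "j \<in> I" for j
  proof (rule link)
    fix i assume i: "i \<in> I"
    show "(B(j := B j \<inter> B x)) i \<inter> {0..1} = (\<Union>c\<in>(J(j := J j \<inter> J x)) i. cell c)"
    proof (cases "i = j")
      case True
      have "(\<Inter>l\<in>{j, x}. B l) \<inter> {0..1} = (\<Union>c\<in>J' {j, x}. cell c)"
        by (rule cell_union) (use j in \<open>auto simp: K_def\<close>)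
      moreover have "J' {j, x} = J j \<inter> J x" by (auto simp: J_def J'_def)
      ultimately show ?thesis using True by simp
    next
      case False
      thus ?thesis using BJ[of i] i by (simp add: K_def)
    qed
  qed (auto simp: J_def J'_def)
  have e4: "(\<Sum>c\<in>J x. \<alpha> c) = hB B {x}"
  proof -
    have "measure (beta_one \<theta>) (B x \<inter> {0..1}) = (\<Sum>c\<in>J x. measure (beta_one \<theta>) (cell c))"
      unfolding BJ[of x, unfolded K_def, simplified]
      by (rule mu_finite_Union) (use J'sub J'fin cell_borel disjoint_family_on_mono[OF J'sub cell_disj] in \<open>auto simp: J_def\<close>)
    thus ?thesis by (simp add: hB_def \<alpha>_def sum_distrib_left)
  qed
  show ?thesis using rec e1 e2 e3 e4 by simp
qed

lemma Gs_U:
  assumes "finite I" "\<And>j. B j \<in> sets borel"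
  shows "pochhammer \<beta> (card I) * Gs I B = Ufun (hB B) I"
  using assms
proof (induction I arbitrary: B rule: finite_induct)
  case empty
  interpret prob_space M by (rule M)
  have pe: "{P. partition_on {} P} = {{}}" by (auto simp: partition_on_empty)
  have "Ufun (hB B) {} = 1" unfolding Ufun_def by (subst pe) simp
  moreover have "Gs {} B = 1" by (simp add: Gs_def prob_space)
  ultimately show ?case by simp
next
  case (insert x I)
  have Bj: "(B(j := B j \<inter> B x)) i \<in> sets borel" for j i using insert.prems by auto
  have hfun: "hB (B(j := B j \<inter> B x)) = (\<lambda>A. if j \<in> A then hB B (insert x A) else hB B A)" for j
  proof
    fix A
    show "hB (B(j := B j \<inter> B x)) A = (if j \<in> A then hB B (insert x A) else hB B A)"
    proof (cases "j \<in> A")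
      case True
      hence "(\<Inter>i\<in>A. (B(j := B j \<inter> B x)) i) = (\<Inter>i\<in>insert x A. B i)" by auto
      thus ?thesis using True by (simp add: hB_def)
    next
      case False
      hence "(\<Inter>i\<in>A. (B(j := B j \<inter> B x)) i) = (\<Inter>i\<in>A. B i)" by auto
      thus ?thesis using False by (simp add: hB_def)
    qed
  qed
  have "pochhammer \<beta> (card (insert x I)) * Gs (insert x I) B
      = pochhammer \<beta> (card I) * ((\<beta> + card I) * Gs (insert x I) B)"
    using insert.hyps by (simp add: pochhammer_Suc mult_ac)
  also have "\<dots> = hB B {x} * (pochhammer \<beta> (card I) * Gs I B) + (\<Sum>j\<in>I. pochhammer \<beta> (card I) * Gs I (B(j := B j \<inter> B x)))"
    by (subst Gs_rec[OF insert.hyps insert.prems]) (simp add: algebra_simps sum_distrib_left)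
  also have "\<dots> = hB B {x} * Ufun (hB B) I + (\<Sum>j\<in>I. Ufun (\<lambda>A. if j \<in> A then hB B (insert x A) else hB B A) I)"
  proof -
    have i1: "pochhammer \<beta> (card I) * Gs I B = Ufun (hB B) I" by (rule insert.IH) (rule insert.prems)
    have i2: "pochhammer \<beta> (card I) * Gs I (B(j := B j \<inter> B x)) = Ufun (\<lambda>A. if j \<in> A then hB B (insert x A) else hB B A) I" for j
      unfolding hfun[symmetric] by (rule insert.IH) (rule Bj)
    show ?thesis unfolding i1 i2 ..
  qed
  also have "\<dots> = Ufun (hB B) (insert x I)"
    by (rule Ufun_rec[symmetric, OF insert.hyps])
  finally show ?case .
qed

end

lemma Inter_borel: "(\<And>j. B j \<in> sets borel) \<Longrightarrow> (\<Inter>j\<in>(A::nat set). B j) \<in> sets borel"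
  by (rule sets.countable_INT'') auto

lemma mu01: "\<theta> > 0 \<Longrightarrow> measure (beta_one \<theta>) {0..1} = 1"
proof -
  assume tpos: "\<theta> > 0"
  interpret prob_space "beta_one \<theta>" by (rule beta_one_prob[OF tpos])
  have "emeasure (beta_one \<theta>) (UNIV \<inter> {0..1}) = emeasure (beta_one \<theta>) UNIV"
    by (rule beta_one_restrict) simp
  thus ?thesis using emeasure_space_1 by (simp add: measure_def)
qed

lemma mu_restrict: "A \<in> sets borel \<Longrightarrow> measure (beta_one \<theta>) (A \<inter> {0..1}) = measure (beta_one \<theta>) A"
  by (simp add: measure_def beta_one_restrict)

context
  fixes M :: "'w measure" and \<nu> :: "'w \<Rightarrow> real measure" and \<beta> \<theta> :: real and v :: "'w \<Rightarrow> nat \<Rightarrow> real"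
  assumes M: "prob_space M" and bpos: "\<beta> > 0" and tpos: "\<theta> > 0"
    and DP: "dirichlet_process M \<nu> \<beta> (beta_one \<theta>)"
    and v_meas: "\<And>i. (\<lambda>\<omega>. v \<omega> i) \<in> borel_measurable M"
    and v_ciid: "\<And>A N B. A \<in> sets (prob_algebra borel) \<Longrightarrow> (\<And>i. B i \<in> sets borel) \<Longrightarrow>
        measure M {\<omega> \<in> space M. \<nu> \<omega> \<in> A \<and> (\<forall>i\<in>{1..N}. v \<omega> i \<in> B i)}
          = (\<integral>\<omega>. indicator A (\<nu> \<omega>) * (\<Prod>i\<in>{1..N}. measure (\<nu> \<omega>) (B i)) \<partial>M)"
begin

lemma AE01: "AE \<omega> in M. measure (\<nu> \<omega>) {0..1} = 1"
proof -
  have F: "\<forall>k>0. \<forall>B :: nat \<Rightarrow> real set.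
         (\<forall>i<k. B i \<in> sets borel) \<and> disjoint_family_on B {..<k} \<and> (\<Union>i<k. B i) = {0..1}
         \<longrightarrow> has_dirichlet M (\<lambda>\<omega> i. measure (\<nu> \<omega>) (B i)) k (\<lambda>i. \<beta> * measure (beta_one \<theta>) (B i))"
    using DP unfolding dirichlet_process_def by (rule conjunct2)
  have D1: "(\<forall>i<1::nat. (\<lambda>_::nat. {0..1::real}) i \<in> sets borel) \<and> disjoint_family_on (\<lambda>_::nat. {0..1::real}) {..<1} \<and> (\<Union>i<1::nat. (\<lambda>_::nat. {0..1::real}) i) = {0..1}"
    by (auto simp: disjoint_family_on_def)
  have "has_dirichlet M (\<lambda>\<omega> i. measure (\<nu> \<omega>) ((\<lambda>_. {0..1::real}) i)) 1 (\<lambda>i. \<beta> * measure (beta_one \<theta>) ((\<lambda>_. {0..1::real}) i))"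
    using F[rule_format, of 1 "\<lambda>_. {0..1}", OF zero_less_one D1] .
  hence H: "has_dirichlet M (\<lambda>\<omega> i. measure (\<nu> \<omega>) {0..1}) 1 (\<lambda>i. \<beta>)"
    using mu01[OF tpos] by simp
  have S: "{i\<in>{..<1::nat}. 0 < \<beta>} = {0}" using bpos by auto
  from H show ?thesis unfolding has_dirichlet_def Let_def S by simp
qed

lemma nu_restrict:
  assumes w: "\<omega> \<in> space M" and one: "measure (\<nu> \<omega>) {0..1} = 1" and B: "B \<in> sets borel"
  shows "measure (\<nu> \<omega>) B = measure (\<nu> \<omega>) (B \<inter> {0..1})"
proof -
  interpret prob_space "\<nu> \<omega>" by (rule nu_prob[OF M bpos tpos DP w])
  have sets: "sets (\<nu> \<omega>) = sets borel" by (rule nu_sets[OF M bpos tpos DP w])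
  hence sp: "space (\<nu> \<omega>) = UNIV" using sets_eq_imp_space_eq[OF sets] by simp
  have Bs: "B \<in> sets (\<nu> \<omega>)" "B \<inter> {0..1} \<in> sets (\<nu> \<omega>)" "{0..1} \<in> sets (\<nu> \<omega>)" using B sets by auto
  have Bc: "space (\<nu> \<omega>) - {0..1} \<in> sets (\<nu> \<omega>)" by (rule sets.compl_sets) (use Bs in auto)
  have "measure (\<nu> \<omega>) (B - B \<inter> {0..1}) = measure (\<nu> \<omega>) B - measure (\<nu> \<omega>) (B \<inter> {0..1})"
    by (rule finite_measure_Diff) (use Bs in auto)
  moreover have "measure (\<nu> \<omega>) (B - B \<inter> {0..1}) \<le> measure (\<nu> \<omega>) (space (\<nu> \<omega>) - {0..1})"
    by (rule finite_measure_mono) (use Bc sp in auto)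
  moreover have "measure (\<nu> \<omega>) (space (\<nu> \<omega>) - {0..1}) = 0"
    using prob_compl[OF Bs(3)] one by simp
  moreover have "measure (\<nu> \<omega>) (B - B \<inter> {0..1}) \<ge> 0" by simp
  ultimately show ?thesis by linarith
qed

lemma rect_prob:
  assumes B: "\<And>j. B j \<in> sets borel"
  shows "measure M {\<omega>\<in>space M. \<forall>j\<in>{1..k}. v \<omega> j \<in> B j} = Ufun (hB \<beta> \<theta> B) {1..k} / pochhammer \<beta> k"
proof -
  interpret prob_space M by (rule M)
  have nus: "\<nu> \<omega> \<in> space (prob_algebra borel)" if "\<omega> \<in> space M" for \<omega>
    using measurable_space[OF nu_meas[OF M bpos tpos DP] that] .
  have "measure M {\<omega>\<in>space M. \<forall>j\<in>{1..k}. v \<omega> j \<in> B j}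
      = measure M {\<omega>\<in>space M. \<nu> \<omega> \<in> space (prob_algebra borel) \<and> (\<forall>j\<in>{1..k}. v \<omega> j \<in> B j)}"
    using nus by (intro arg_cong[where f="measure M"]) auto
  also have "\<dots> = (\<integral>\<omega>. indicator (space (prob_algebra borel)) (\<nu> \<omega>) * (\<Prod>i\<in>{1..k}. measure (\<nu> \<omega>) (B i)) \<partial>M)"
    by (rule v_ciid) (auto intro: B)
  also have "\<dots> = (\<integral>\<omega>. (\<Prod>i\<in>{1..k}. measure (\<nu> \<omega>) (B i \<inter> {0..1})) \<partial>M)"
  proof (rule integral_cong_AE)
    show "(\<lambda>\<omega>. indicator (space (prob_algebra borel)) (\<nu> \<omega>) * (\<Prod>i\<in>{1..k}. measure (\<nu> \<omega>) (B i))) \<in> borel_measurable M"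
    proof -
      have "(\<lambda>\<omega>. indicator (space (prob_algebra borel)) (\<nu> \<omega>) * (\<Prod>i\<in>{1..k}. measure (\<nu> \<omega>) (B i))) \<in> borel_measurable M
          \<longleftrightarrow> (\<lambda>\<omega>. (\<Prod>i\<in>{1..k}. measure (\<nu> \<omega>) (B i))) \<in> borel_measurable M"
        by (rule measurable_cong) (simp add: nus)
      moreover have "(\<lambda>\<omega>. (\<Prod>i\<in>{1..k}. measure (\<nu> \<omega>) (B i))) \<in> borel_measurable M"
        by (rule borel_measurable_prod, rule nuA_meas[OF M bpos tpos DP], rule B)
      ultimately show ?thesis by simp
    qed
    show "(\<lambda>\<omega>. \<Prod>i\<in>{1..k}. measure (\<nu> \<omega>) (B i \<inter> {0..1})) \<in> borel_measurable M"
      by (rule borel_measurable_prod, rule nuA_meas[OF M bpos tpos DP], rule sets.Int[OF B], simp)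
    show "AE \<omega> in M. indicator (space (prob_algebra borel)) (\<nu> \<omega>) * (\<Prod>i\<in>{1..k}. measure (\<nu> \<omega>) (B i))
        = (\<Prod>i\<in>{1..k}. measure (\<nu> \<omega>) (B i \<inter> {0..1}))"
      using AE01 AE_space
    proof eventually_elim
      case (elim \<omega>)
      have "indicator (space (prob_algebra borel)) (\<nu> \<omega>) = (1::real)" using nus[of \<omega>] elim by simp
      moreover have "(\<Prod>i\<in>{1..k}. measure (\<nu> \<omega>) (B i)) = (\<Prod>i\<in>{1..k}. measure (\<nu> \<omega>) (B i \<inter> {0..1}))"
        by (rule prod.cong[OF refl], rule nu_restrict) (use elim B in auto)
      ultimately show ?case by simp
    qed
  qed
  also have "\<dots> = Gs M \<nu> {1..k} B" by (simp add: Gs_def[OF M bpos tpos DP])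
  also have "\<dots> = Ufun (hB \<beta> \<theta> B) {1..k} / pochhammer \<beta> k"
  proof -
    have "pochhammer \<beta> (card {1..k}) * Gs M \<nu> {1..k} B = Ufun (hB \<beta> \<theta> B) {1..k}"
      by (rule Gs_U[OF M bpos tpos DP]) (auto intro: B)
    moreover have "pochhammer \<beta> k > 0" using bpos by (rule pochhammer_pos)
    ultimately show ?thesis by (simp add: field_simps)
  qed
  finally show ?thesis .
qed

end

definition blk :: "nat set set \<Rightarrow> nat \<Rightarrow> nat set" where
  "blk P j = (THE A. A \<in> P \<and> j \<in> A)"

lemma blk_eq:
  assumes "partition_on K P" "A \<in> P" "j \<in> A"
  shows "blk P j = A"
  unfolding blk_def
proof (rule the_equality)
  show "A \<in> P \<and> j \<in> A" using assms by auto
  fix A' assume "A' \<in> P \<and> j \<in> A'"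
  thus "A' = A" using assms partition_onD2[OF assms(1)] by (auto simp: disjoint_def)
qed

lemma blk_in:
  assumes "partition_on K P" "j \<in> K"
  shows "blk P j \<in> P" "j \<in> blk P j"
proof -
  obtain A where "A \<in> P" "j \<in> A" using partition_onD1[OF assms(1)] assms(2) by auto
  thus "blk P j \<in> P" "j \<in> blk P j" using blk_eq[OF assms(1)] by auto
qed

definition emb :: "nat set \<Rightarrow> nat set set \<Rightarrow> (nat set \<Rightarrow> real) \<Rightarrow> nat \<Rightarrow> real" where
  "emb K P y = (\<lambda>j\<in>K. y (blk P j))"

lemma emb_measurable:
  assumes "partition_on K P"
  shows "emb K P \<in> measurable (Pi\<^sub>M P (\<lambda>_. beta_one \<theta>)) (Pi\<^sub>M K (\<lambda>_. borel))"
  unfolding emb_def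
proof (rule measurable_restrict)
  fix j assume "j \<in> K"
  hence "blk P j \<in> P" using blk_in[OF assms] by auto
  hence "(\<lambda>y. y (blk P j)) \<in> measurable (Pi\<^sub>M P (\<lambda>_. beta_one \<theta>)) (beta_one \<theta>)"
    by (rule measurable_component_singleton)
  thus "(\<lambda>y. y (blk P j)) \<in> measurable (Pi\<^sub>M P (\<lambda>_. beta_one \<theta>)) borel"
    by (simp cong: measurable_cong_sets)
qed

definition cw :: "real \<Rightarrow> nat set \<Rightarrow> nat set set \<Rightarrow> real" where
  "cw \<beta> K P = (\<Prod>A\<in>P. fact (card A - 1) * \<beta>) / pochhammer \<beta> (card K)"

lemma cw_nonneg: "\<beta> > 0 \<Longrightarrow> cw \<beta> K P \<ge> 0"
  unfolding cw_def by (intro divide_nonneg_nonneg prod_nonneg mult_nonneg_nonneg)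
    (auto intro: less_imp_le pochhammer_pos)

definition "Parts K = {P. partition_on K P}"

definition Rm :: "real \<Rightarrow> real \<Rightarrow> nat set \<Rightarrow> (nat \<Rightarrow> real) measure" where
  "Rm \<beta> \<theta> K = density (count_space (Parts K)) (\<lambda>P. ennreal (cw \<beta> K P))
      \<bind> (\<lambda>P. distr (Pi\<^sub>M P (\<lambda>_. beta_one \<theta>)) (Pi\<^sub>M K (\<lambda>_. borel)) (emb K P))"

lemma kernel_meas:
  assumes tpos: "\<theta> > 0"
  shows "(\<lambda>P. distr (Pi\<^sub>M P (\<lambda>_. beta_one \<theta>)) (Pi\<^sub>M K (\<lambda>_. borel)) (emb K P))
    \<in> measurable (density (count_space (Parts K)) (\<lambda>P. ennreal (cw \<beta> K P))) (subprob_algebra (Pi\<^sub>M K (\<lambda>_. borel)))"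
proof -
  have "(\<lambda>P. distr (Pi\<^sub>M P (\<lambda>_. beta_one \<theta>)) (Pi\<^sub>M K (\<lambda>_. borel)) (emb K P))
    \<in> measurable (count_space (Parts K)) (subprob_algebra (Pi\<^sub>M K (\<lambda>_. borel)))"
  proof (subst measurable_count_space_eq1, rule Pi_I)
    fix P assume "P \<in> Parts K"
    hence P: "partition_on K P" by (simp add: Parts_def)
    interpret prob_space "Pi\<^sub>M P (\<lambda>_. beta_one \<theta>)" by (rule prob_space_PiM) (rule beta_one_prob[OF tpos])
    have "prob_space (distr (Pi\<^sub>M P (\<lambda>_. beta_one \<theta>)) (Pi\<^sub>M K (\<lambda>_. borel)) (emb K P))"
      by (rule prob_space_distr) (rule emb_measurable[OF P])
    thus "distr (Pi\<^sub>M P (\<lambda>_. beta_one \<theta>)) (Pi\<^sub>M K (\<lambda>_. borel)) (emb K P) \<in> space (subprob_algebra (Pi\<^sub>M K (\<lambda>_. borel)))"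
      by (auto simp: space_subprob_algebra prob_space_imp_subprob_space)
  qed
  thus ?thesis by (simp cong: measurable_cong_sets)
qed

lemma Parts_nonempty: "Parts K \<noteq> {}" if "finite K"
proof (cases "K = {}")
  case True thus ?thesis by (auto simp: Parts_def partition_on_empty)
next
  case False thus ?thesis using partition_on_space[OF False] by (auto simp: Parts_def)
qed

lemma Parts_finite: "finite K \<Longrightarrow> finite (Parts K)"
  by (simp add: Parts_def finitely_many_partition_on)

lemma Rm_nn_integral:
  assumes tpos: "\<theta> > 0" and K: "finite K" and F: "F \<in> borel_measurable (Pi\<^sub>M K (\<lambda>_. borel))"
  shows "(\<integral>\<^sup>+z. F z \<partial>Rm \<beta> \<theta> K) = (\<Sum>P\<in>Parts K. ennreal (cw \<beta> K P) * (\<integral>\<^sup>+y. F (emb K P y) \<partial>Pi\<^sub>M P (\<lambda>_. beta_one \<theta>)))"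
proof -
  have "(\<integral>\<^sup>+z. F z \<partial>Rm \<beta> \<theta> K) = (\<integral>\<^sup>+P. (\<integral>\<^sup>+z. F z \<partial>distr (Pi\<^sub>M P (\<lambda>_. beta_one \<theta>)) (Pi\<^sub>M K (\<lambda>_. borel)) (emb K P))
         \<partial>density (count_space (Parts K)) (\<lambda>P. ennreal (cw \<beta> K P)))"
    unfolding Rm_def by (rule nn_integral_bind[OF F kernel_meas[OF tpos]])
  also have "\<dots> = (\<integral>\<^sup>+P. ennreal (cw \<beta> K P) * (\<integral>\<^sup>+z. F z \<partial>distr (Pi\<^sub>M P (\<lambda>_. beta_one \<theta>)) (Pi\<^sub>M K (\<lambda>_. borel)) (emb K P)) \<partial>count_space (Parts K))"
    by (rule nn_integral_density) auto
  also have "\<dots> = (\<Sum>P\<in>Parts K. ennreal (cw \<beta> K P) * (\<integral>\<^sup>+z. F z \<partial>distr (Pi\<^sub>M P (\<lambda>_. beta_one \<theta>)) (Pi\<^sub>M K (\<lambda>_. borel)) (emb K P)))"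
    by (rule nn_integral_count_space_finite[OF Parts_finite[OF K]])
  also have "\<dots> = (\<Sum>P\<in>Parts K. ennreal (cw \<beta> K P) * (\<integral>\<^sup>+y. F (emb K P y) \<partial>Pi\<^sub>M P (\<lambda>_. beta_one \<theta>)))"
  proof (rule sum.cong[OF refl])
    fix P assume "P \<in> Parts K"
    hence P: "partition_on K P" by (simp add: Parts_def)
    show "ennreal (cw \<beta> K P) * (\<integral>\<^sup>+z. F z \<partial>distr (Pi\<^sub>M P (\<lambda>_. beta_one \<theta>)) (Pi\<^sub>M K (\<lambda>_. borel)) (emb K P))
        = ennreal (cw \<beta> K P) * (\<integral>\<^sup>+y. F (emb K P y) \<partial>Pi\<^sub>M P (\<lambda>_. beta_one \<theta>))"
      by (subst nn_integral_distr[OF emb_measurable[OF P]]) (use F in simp_all)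
  qed
  finally show ?thesis .
qed

lemma emb_preimage:
  assumes P: "partition_on K P"
  shows "emb K P -` Pi\<^sub>E K B \<inter> space (Pi\<^sub>M P (\<lambda>_. beta_one \<theta>)) = Pi\<^sub>E P (\<lambda>A. \<Inter>j\<in>A. B j)"
proof (intro equalityI subsetI)
  fix y assume y: "y \<in> emb K P -` Pi\<^sub>E K B \<inter> space (Pi\<^sub>M P (\<lambda>_. beta_one \<theta>))"
  hence ext: "y \<in> extensional P" by (auto simp: space_PiM PiE_def)
  have "y A \<in> B j" if "A \<in> P" "j \<in> A" for A j
  proof -
    have "j \<in> K" using partition_onD1[OF P] that by auto
    hence "emb K P y j \<in> B j" using y by (auto simp: PiE_def Pi_def)
    thus ?thesis using blk_eq[OF P that] \<open>j \<in> K\<close> by (simp add: emb_def)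
  qed
  thus "y \<in> Pi\<^sub>E P (\<lambda>A. \<Inter>j\<in>A. B j)" using ext by (auto simp: PiE_def Pi_def)
next
  fix y assume y: "y \<in> Pi\<^sub>E P (\<lambda>A. \<Inter>j\<in>A. B j)"
  have "emb K P y \<in> Pi\<^sub>E K B"
  proof -
    have "y (blk P j) \<in> B j" if "j \<in> K" for j
      using y blk_in[OF P that] by (auto simp: PiE_def Pi_def)
    thus ?thesis by (auto simp: emb_def PiE_def Pi_def)
  qed
  moreover have "y \<in> space (Pi\<^sub>M P (\<lambda>_. beta_one \<theta>))" using y by (auto simp: space_PiM PiE_def Pi_def)
  ultimately show "y \<in> emb K P -` Pi\<^sub>E K B \<inter> space (Pi\<^sub>M P (\<lambda>_. beta_one \<theta>))" by auto
qed

lemma Rm_rect: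
  assumes tpos: "\<theta> > 0" and K: "finite K" and B: "\<And>j. B j \<in> sets borel"
  shows "emeasure (Rm \<beta> \<theta> K) (Pi\<^sub>E K B) = (\<Sum>P\<in>Parts K. ennreal (cw \<beta> K P) * (\<Prod>A\<in>P. emeasure (beta_one \<theta>) (\<Inter>j\<in>A. B j)))"
proof -
  interpret product_sigma_finite "\<lambda>_::nat set. beta_one \<theta>"
    unfolding product_sigma_finite_def using beta_one_prob[OF tpos] by (simp add: prob_space_imp_sigma_finite)
  have PiB: "Pi\<^sub>E K B \<in> sets (Pi\<^sub>M K (\<lambda>_. borel))" using B K by (intro sets_PiM_I_finite) auto
  have "emeasure (Rm \<beta> \<theta> K) (Pi\<^sub>E K B) = (\<integral>\<^sup>+P. emeasure (distr (Pi\<^sub>M P (\<lambda>_. beta_one \<theta>)) (Pi\<^sub>M K (\<lambda>_. borel)) (emb K P)) (Pi\<^sub>E K B)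
         \<partial>density (count_space (Parts K)) (\<lambda>P. ennreal (cw \<beta> K P)))"
    unfolding Rm_def by (rule emeasure_bind[OF _ kernel_meas[OF tpos] PiB]) (use Parts_nonempty[OF K] in simp)
  also have "\<dots> = (\<integral>\<^sup>+P. ennreal (cw \<beta> K P) * emeasure (distr (Pi\<^sub>M P (\<lambda>_. beta_one \<theta>)) (Pi\<^sub>M K (\<lambda>_. borel)) (emb K P)) (Pi\<^sub>E K B) \<partial>count_space (Parts K))"
    by (rule nn_integral_density) auto
  also have "\<dots> = (\<Sum>P\<in>Parts K. ennreal (cw \<beta> K P) * emeasure (distr (Pi\<^sub>M P (\<lambda>_. beta_one \<theta>)) (Pi\<^sub>M K (\<lambda>_. borel)) (emb K P)) (Pi\<^sub>E K B))"
    by (rule nn_integral_count_space_finite[OF Parts_finite[OF K]])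
  also have "\<dots> = (\<Sum>P\<in>Parts K. ennreal (cw \<beta> K P) * (\<Prod>A\<in>P. emeasure (beta_one \<theta>) (\<Inter>j\<in>A. B j)))"
  proof (rule sum.cong[OF refl])
    fix P assume "P \<in> Parts K"
    hence P: "partition_on K P" by (simp add: Parts_def)
    have finP: "finite P" using finite_elements[OF K P] .
    have "emeasure (distr (Pi\<^sub>M P (\<lambda>_. beta_one \<theta>)) (Pi\<^sub>M K (\<lambda>_. borel)) (emb K P)) (Pi\<^sub>E K B)
        = emeasure (Pi\<^sub>M P (\<lambda>_. beta_one \<theta>)) (Pi\<^sub>E P (\<lambda>A. \<Inter>j\<in>A. B j))"
      by (subst emeasure_distr[OF emb_measurable[OF P] PiB]) (simp add: emb_preimage[OF P])
    also have "\<dots> = (\<Prod>A\<in>P. emeasure (beta_one \<theta>) (\<Inter>j\<in>A. B j))"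
      by (rule emeasure_PiM[OF finP]) (simp add: Inter_borel B)
    finally show "ennreal (cw \<beta> K P) * emeasure (distr (Pi\<^sub>M P (\<lambda>_. beta_one \<theta>)) (Pi\<^sub>M K (\<lambda>_. borel)) (emb K P)) (Pi\<^sub>E K B)
        = ennreal (cw \<beta> K P) * (\<Prod>A\<in>P. emeasure (beta_one \<theta>) (\<Inter>j\<in>A. B j))" by simp
  qed
  finally show ?thesis .
qed

lemma sets_Rm: "finite K \<Longrightarrow> sets (Rm \<beta> \<theta> K) = sets (Pi\<^sub>M K (\<lambda>_. borel))"
  unfolding Rm_def by (rule sets_bind) (auto simp: Parts_nonempty)

context
  fixes M :: "'w measure" and \<nu> :: "'w \<Rightarrow> real measure" and \<beta> \<theta> :: real and v :: "'w \<Rightarrow> nat \<Rightarrow> real"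
  assumes M: "prob_space M" and bpos: "\<beta> > 0" and tpos: "\<theta> > 0"
    and DP: "dirichlet_process M \<nu> \<beta> (beta_one \<theta>)"
    and v_meas: "\<And>i. (\<lambda>\<omega>. v \<omega> i) \<in> borel_measurable M"
    and v_ciid: "\<And>A N B. A \<in> sets (prob_algebra borel) \<Longrightarrow> (\<And>i. B i \<in> sets borel) \<Longrightarrow>
        measure M {\<omega> \<in> space M. \<nu> \<omega> \<in> A \<and> (\<forall>i\<in>{1..N}. v \<omega> i \<in> B i)}
          = (\<integral>\<omega>. indicator A (\<nu> \<omega>) * (\<Prod>i\<in>{1..N}. measure (\<nu> \<omega>) (B i)) \<partial>M)"
begin

lemma vres_meas: "(\<lambda>\<omega>. restrict (v \<omega>) K) \<in> measurable M (Pi\<^sub>M K (\<lambda>_. borel))"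
  by (rule measurable_restrict) (rule v_meas)

lemma law_eq:
  "distr M (Pi\<^sub>M {1..k} (\<lambda>_. borel)) (\<lambda>\<omega>. restrict (v \<omega>) {1..k}) = Rm \<beta> \<theta> {1..k}"
proof (rule measure_eqI_PiM_finite[where A="\<lambda>_. space (Pi\<^sub>M {1..k} (\<lambda>_. borel))"])
  interpret prob_space M by (rule M)
  show "finite {1..k}" by simp
  show "sets (distr M (Pi\<^sub>M {1..k} (\<lambda>_. borel)) (\<lambda>\<omega>. restrict (v \<omega>) {1..k})) = sets (Pi\<^sub>M {1..k} (\<lambda>_. borel))" by simp
  show "sets (Rm \<beta> \<theta> {1..k}) = sets (Pi\<^sub>M {1..k} (\<lambda>_. borel))" by (simp add: sets_Rm)
  show "range (\<lambda>_. space (Pi\<^sub>M {1..k} (\<lambda>_. borel))) \<subseteq> prod_algebra {1..k} (\<lambda>_. borel)"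
    by (auto simp: space_PiM intro!: prod_algebraI_finite)
  show "(\<Union>i::nat. space (Pi\<^sub>M {1..k} (\<lambda>_. borel))) = space (Pi\<^sub>M {1..k} (\<lambda>_. borel))" by simp
  show "emeasure (distr M (Pi\<^sub>M {1..k} (\<lambda>_. borel)) (\<lambda>\<omega>. restrict (v \<omega>) {1..k})) (space (Pi\<^sub>M {1..k} (\<lambda>_. borel))) \<noteq> \<infinity>" for i :: nat
  proof -
    interpret D: prob_space "distr M (Pi\<^sub>M {1..k} (\<lambda>_. borel)) (\<lambda>\<omega>. restrict (v \<omega>) {1..k})"
      by (rule prob_space_distr) (rule vres_meas)
    show ?thesis using D.emeasure_space_1 by simp
  qed
  fix A :: "nat \<Rightarrow> real set" assume A: "\<And>i. i \<in> {1..k} \<Longrightarrow> A i \<in> sets borel"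
  define B where "B j = (if j \<in> {1..k} then A j else UNIV)" for j
  have B: "B j \<in> sets borel" for j using A by (auto simp: B_def)
  have PiAB: "Pi\<^sub>E {1..k} A = Pi\<^sub>E {1..k} B" by (auto simp: B_def PiE_def Pi_def)
  have PiB: "Pi\<^sub>E {1..k} B \<in> sets (Pi\<^sub>M {1..k} (\<lambda>_. borel))" using B by (intro sets_PiM_I_finite) auto
  have "emeasure (distr M (Pi\<^sub>M {1..k} (\<lambda>_. borel)) (\<lambda>\<omega>. restrict (v \<omega>) {1..k})) (Pi\<^sub>E {1..k} B)
      = emeasure M {\<omega>\<in>space M. \<forall>j\<in>{1..k}. v \<omega> j \<in> B j}"
    by (subst emeasure_distr[OF vres_meas PiB]) (auto intro!: arg_cong[where f="emeasure M"] simp: PiE_def Pi_def)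
  also have "\<dots> = ennreal (measure M {\<omega>\<in>space M. \<forall>j\<in>{1..k}. v \<omega> j \<in> B j})"
    by (rule emeasure_eq_measure)
  also have "\<dots> = ennreal (Ufun (hB \<beta> \<theta> B) {1..k} / pochhammer \<beta> k)"
    by (subst rect_prob[OF M bpos tpos DP v_meas v_ciid B]) auto
  also have "Ufun (hB \<beta> \<theta> B) {1..k} / pochhammer \<beta> k
      = (\<Sum>P\<in>Parts {1..k}. cw \<beta> {1..k} P * (\<Prod>A\<in>P. measure (beta_one \<theta>) (\<Inter>j\<in>A. B j)))"
    unfolding Ufun_def Parts_def cw_def sum_divide_distrib
  proof (intro sum.cong refl)
    fix P
    have "(\<Prod>A\<in>P. fact (card A - 1) * hB \<beta> \<theta> B A) = (\<Prod>A\<in>P. fact (card A - 1) * \<beta>) * (\<Prod>A\<in>P. measure (beta_one \<theta>) (\<Inter>j\<in>A. B j))"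
      unfolding prod.distrib[symmetric]
      by (intro prod.cong refl) (simp add: hB_def[OF M bpos tpos DP] mu_restrict Inter_borel[OF B])
    thus "(\<Prod>A\<in>P. fact (card A - 1) * hB \<beta> \<theta> B A) / pochhammer \<beta> k
        = (\<Prod>A\<in>P. fact (card A - 1) * \<beta>) / pochhammer \<beta> (card {1..k}) * (\<Prod>A\<in>P. measure (beta_one \<theta>) (\<Inter>j\<in>A. B j))"
      by simp
  qed
  also have "ennreal (\<Sum>P\<in>Parts {1..k}. cw \<beta> {1..k} P * (\<Prod>A\<in>P. measure (beta_one \<theta>) (\<Inter>j\<in>A. B j)))
      = (\<Sum>P\<in>Parts {1..k}. ennreal (cw \<beta> {1..k} P) * (\<Prod>A\<in>P. emeasure (beta_one \<theta>) (\<Inter>j\<in>A. B j)))"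
  proof -
    interpret mu: prob_space "beta_one \<theta>" by (rule beta_one_prob[OF tpos])
    have "ennreal (cw \<beta> {1..k} P * (\<Prod>A\<in>P. measure (beta_one \<theta>) (\<Inter>j\<in>A. B j)))
        = ennreal (cw \<beta> {1..k} P) * (\<Prod>A\<in>P. emeasure (beta_one \<theta>) (\<Inter>j\<in>A. B j))" for P
      using cw_nonneg[OF bpos]
      by (simp add: ennreal_mult prod_nonneg prod_ennreal[symmetric] mu.emeasure_eq_measure)
    thus ?thesis
      by (subst sum_ennreal[symmetric]) (auto intro!: mult_nonneg_nonneg prod_nonneg cw_nonneg bpos)
  qed
  also have "\<dots> = emeasure (Rm \<beta> \<theta> {1..k}) (Pi\<^sub>E {1..k} B)"
    by (rule Rm_rect[OF tpos _ B, symmetric]) simp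
  finally show "emeasure (distr M (Pi\<^sub>M {1..k} (\<lambda>_. borel)) (\<lambda>\<omega>. restrict (v \<omega>) {1..k})) (Pi\<^sub>E {1..k} A)
      = emeasure (Rm \<beta> \<theta> {1..k}) (Pi\<^sub>E {1..k} A)" unfolding PiAB .
qed

lemma mix_int:
  fixes f :: "nat \<Rightarrow> real \<Rightarrow> real"
  assumes fpos: "\<And>j t. 0 \<le> f j t" and fm[measurable]: "\<And>j. f j \<in> borel_measurable borel"
  shows "(\<integral>\<^sup>+\<omega>. ennreal (\<Prod>j\<in>{1..k}. f j (v \<omega> j)) \<partial>M)
    = (\<Sum>P\<in>Parts {1..k}. ennreal (cw \<beta> {1..k} P) * (\<Prod>A\<in>P. \<integral>\<^sup>+t. ennreal (\<Prod>j\<in>A. f j t) \<partial>beta_one \<theta>))"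
proof -
  define F where "F z = ennreal (\<Prod>j\<in>{1..k}. f j (z j))" for z :: "nat \<Rightarrow> real"
  have Fm: "F \<in> borel_measurable (Pi\<^sub>M {1..k} (\<lambda>_. borel))" unfolding F_def by measurable
  have "(\<integral>\<^sup>+\<omega>. ennreal (\<Prod>j\<in>{1..k}. f j (v \<omega> j)) \<partial>M) = (\<integral>\<^sup>+\<omega>. F (restrict (v \<omega>) {1..k}) \<partial>M)"
    unfolding F_def by (intro nn_integral_cong arg_cong[where f=ennreal] prod.cong) auto
  also have "\<dots> = (\<integral>\<^sup>+z. F z \<partial>distr M (Pi\<^sub>M {1..k} (\<lambda>_. borel)) (\<lambda>\<omega>. restrict (v \<omega>) {1..k}))"
    by (rule nn_integral_distr[symmetric, OF vres_meas]) (use Fm in simp)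
  also have "\<dots> = (\<integral>\<^sup>+z. F z \<partial>Rm \<beta> \<theta> {1..k})" unfolding law_eq ..
  also have "\<dots> = (\<Sum>P\<in>Parts {1..k}. ennreal (cw \<beta> {1..k} P) * (\<integral>\<^sup>+y. F (emb {1..k} P y) \<partial>Pi\<^sub>M P (\<lambda>_. beta_one \<theta>)))"
    by (rule Rm_nn_integral[OF tpos _ Fm]) simp
  also have "\<dots> = (\<Sum>P\<in>Parts {1..k}. ennreal (cw \<beta> {1..k} P) * (\<Prod>A\<in>P. \<integral>\<^sup>+t. ennreal (\<Prod>j\<in>A. f j t) \<partial>beta_one \<theta>))"
  proof (rule sum.cong[OF refl])
    fix P assume "P \<in> Parts {1..k}"
    hence P: "partition_on {1..k} P" by (simp add: Parts_def)
    have finP: "finite P" using finite_elements[OF _ P] by simp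
    interpret product_sigma_finite "\<lambda>_::nat set. beta_one \<theta>"
      unfolding product_sigma_finite_def using beta_one_prob[OF tpos] by (simp add: prob_space_imp_sigma_finite)
    have "(\<integral>\<^sup>+y. F (emb {1..k} P y) \<partial>Pi\<^sub>M P (\<lambda>_. beta_one \<theta>))
        = (\<integral>\<^sup>+y. (\<Prod>A\<in>P. ennreal (\<Prod>j\<in>A. f j (y A))) \<partial>Pi\<^sub>M P (\<lambda>_. beta_one \<theta>))"
    proof (intro nn_integral_cong)
      fix y :: "nat set \<Rightarrow> real"
      have UP: "\<Union>P = {1..k}" using partition_onD1[OF P] by simp
      have finA: "\<forall>A\<in>P. finite A" using UP by (metis Union_upper finite_atLeastAtMost finite_subset)
      have dis: "\<forall>A\<in>P. \<forall>B\<in>P. A \<noteq> B \<longrightarrow> A \<inter> B = {}" using partition_onD2[OF P] by (auto simp: disjoint_def)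
      have "(\<Prod>j\<in>{1..k}. f j (emb {1..k} P y j)) = (\<Prod>j\<in>\<Union>P. f j (y (blk P j)))"
        unfolding UP by (intro prod.cong refl) (simp add: emb_def)
      also have "\<dots> = (\<Prod>A\<in>P. \<Prod>j\<in>A. f j (y (blk P j)))"
        by (rule prod.Union_disjoint[unfolded o_def, OF finA dis])
      also have "\<dots> = (\<Prod>A\<in>P. \<Prod>j\<in>A. f j (y A))"
        by (intro prod.cong refl) (simp add: blk_eq[OF P])
      finally show "F (emb {1..k} P y) = (\<Prod>A\<in>P. ennreal (\<Prod>j\<in>A. f j (y A)))"
        unfolding F_def by (simp add: prod_ennreal prod_nonneg fpos)
    qed
    also have "\<dots> = (\<Prod>A\<in>P. \<integral>\<^sup>+t. ennreal (\<Prod>j\<in>A. f j t) \<partial>beta_one \<theta>)"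
      by (rule product_nn_integral_prod[OF finP]) measurable
    finally show "ennreal (cw \<beta> {1..k} P) * (\<integral>\<^sup>+y. F (emb {1..k} P y) \<partial>Pi\<^sub>M P (\<lambda>_. beta_one \<theta>))
        = ennreal (cw \<beta> {1..k} P) * (\<Prod>A\<in>P. \<integral>\<^sup>+t. ennreal (\<Prod>j\<in>A. f j t) \<partial>beta_one \<theta>)" by simp
  qed
  finally show ?thesis .
qed

end

lemma weights_prod:
  fixes w :: "nat \<Rightarrow> real" and dd :: "nat \<Rightarrow> nat"
  assumes dd: "\<And>l. l \<in> {1..n} \<Longrightarrow> 1 \<le> dd l \<and> dd l \<le> k"
  shows "(\<Prod>l\<in>{1..n}. dsb_weight w (dd l))
       = (\<Prod>j\<in>{1..k}. w j ^ card {l\<in>{1..n}. dd l = j} * (1 - w j) ^ card {l\<in>{1..n}. dd l > j})"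
proof -
  have "(\<Prod>l\<in>{1..n}. dsb_weight w (dd l)) = (\<Prod>l\<in>{1..n}. w (dd l) * (\<Prod>i\<in>{1..<dd l}. (1 - w i)))"
    using dd by (intro prod.cong refl) (force simp: dsb_weight_def)
  also have "\<dots> = (\<Prod>l\<in>{1..n}. w (dd l)) * (\<Prod>l\<in>{1..n}. \<Prod>i\<in>{1..<dd l}. (1 - w i))"
    by (rule prod.distrib)
  also have "(\<Prod>l\<in>{1..n}. w (dd l)) = (\<Prod>j\<in>{1..k}. w j ^ card {l\<in>{1..n}. dd l = j})"
    by (rule prod_fiber_pow) (use dd in auto)
  also have "(\<Prod>l\<in>{1..n}. \<Prod>i\<in>{1..<dd l}. (1 - w i)) = (\<Prod>l\<in>{1..n}. \<Prod>i\<in>{1..k}. (if i < dd l then 1 - w i else 1))"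
  proof (rule prod.cong[OF refl])
    fix l assume l: "l \<in> {1..n}"
    have "{i\<in>{1..k}. i < dd l} = {1..<dd l}" using dd[OF l] by auto
    hence "(\<Prod>i\<in>{1..<dd l}. (1 - w i)) = (\<Prod>i\<in>{i\<in>{1..k}. i < dd l}. (1 - w i))" by simp
    also have "\<dots> = (\<Prod>i\<in>{1..k}. (if i < dd l then 1 - w i else 1))" by (rule prod.inter_filter) simp
    finally show "(\<Prod>i\<in>{1..<dd l}. (1 - w i)) = (\<Prod>i\<in>{1..k}. (if i < dd l then 1 - w i else 1))" .
  qed
  also have "\<dots> = (\<Prod>i\<in>{1..k}. \<Prod>l\<in>{1..n}. (if i < dd l then 1 - w i else 1))"
    by (rule prod.swap)
  also have "\<dots> = (\<Prod>i\<in>{1..k}. (1 - w i) ^ card {l\<in>{1..n}. dd l > i})"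
  proof (rule prod.cong[OF refl])
    fix i
    have "(\<Prod>l\<in>{1..n}. (if i < dd l then 1 - w i else 1)) = (\<Prod>l\<in>{l\<in>{1..n}. i < dd l}. 1 - w i)"
      by (rule prod.inter_filter[symmetric]) simp
    also have "\<dots> = (1 - w i) ^ card {l\<in>{1..n}. dd l > i}" by simp
    finally show "(\<Prod>l\<in>{1..n}. (if i < dd l then 1 - w i else 1)) = (1 - w i) ^ card {l\<in>{1..n}. dd l > i}" .
  qed
  finally show ?thesis by (simp add: prod.distrib)
qed


context
  fixes M :: "'w measure" and \<nu> :: "'w \<Rightarrow> real measure" and \<beta> \<theta> :: real and v :: "'w \<Rightarrow> nat \<Rightarrow> real"
  assumes M: "prob_space M" and bpos: "\<beta> > 0" and tpos: "\<theta> > 0"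
    and DP: "dirichlet_process M \<nu> \<beta> (beta_one \<theta>)"
    and v_meas: "\<And>i. (\<lambda>\<omega>. v \<omega> i) \<in> borel_measurable M"
    and v_ciid: "\<And>A N B. A \<in> sets (prob_algebra borel) \<Longrightarrow> (\<And>i. B i \<in> sets borel) \<Longrightarrow>
        measure M {\<omega> \<in> space M. \<nu> \<omega> \<in> A \<and> (\<forall>i\<in>{1..N}. v \<omega> i \<in> B i)}
          = (\<integral>\<omega>. indicator A (\<nu> \<omega>) * (\<Prod>i\<in>{1..N}. measure (\<nu> \<omega>) (B i)) \<partial>M)"
begin

lemma AE01': "AE \<omega> in M. measure (\<nu> \<omega>) {0..1} = 1"
  by (rule AE01[OF M bpos tpos DP v_meas]) (rule v_ciid)

lemma AEv:
  assumes j: "1 \<le> j"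
  shows "AE \<omega> in M. v \<omega> j \<in> {0..1}"
proof -
  interpret prob_space M by (rule M)
  have nus: "\<nu> \<omega> \<in> space (prob_algebra borel)" if "\<omega> \<in> space M" for \<omega>
    using measurable_space[OF nu_meas[OF M bpos tpos DP] that] .
  define B where "B i = (if i = j then UNIV - {0..1} else (UNIV::real set))" for i
  have Bb: "B i \<in> sets borel" for i by (auto simp: B_def)
  have "measure M {\<omega>\<in>space M. \<nu> \<omega> \<in> space (prob_algebra borel) \<and> (\<forall>i\<in>{1..j}. v \<omega> i \<in> B i)}
      = (\<integral>\<omega>. indicator (space (prob_algebra borel)) (\<nu> \<omega>) * (\<Prod>i\<in>{1..j}. measure (\<nu> \<omega>) (B i)) \<partial>M)"
    by (rule v_ciid) (auto intro: Bb)
  also have "\<dots> = (\<integral>\<omega>. 0 \<partial>M)"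
  proof (rule integral_cong_AE)
    have "(\<lambda>\<omega>. indicator (space (prob_algebra borel)) (\<nu> \<omega>) * (\<Prod>i\<in>{1..j}. measure (\<nu> \<omega>) (B i))) \<in> borel_measurable M
        \<longleftrightarrow> (\<lambda>\<omega>. (\<Prod>i\<in>{1..j}. measure (\<nu> \<omega>) (B i))) \<in> borel_measurable M"
      by (rule measurable_cong) (simp add: nus)
    moreover have "(\<lambda>\<omega>. (\<Prod>i\<in>{1..j}. measure (\<nu> \<omega>) (B i))) \<in> borel_measurable M"
      by (rule borel_measurable_prod, rule nuA_meas[OF M bpos tpos DP], rule Bb)
    ultimately show "(\<lambda>\<omega>. indicator (space (prob_algebra borel)) (\<nu> \<omega>) * (\<Prod>i\<in>{1..j}. measure (\<nu> \<omega>) (B i))) \<in> borel_measurable M"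
      by simp
    show "(\<lambda>\<omega>. 0::real) \<in> borel_measurable M" by simp
    show "AE \<omega> in M. indicator (space (prob_algebra borel)) (\<nu> \<omega>) * (\<Prod>i\<in>{1..j}. measure (\<nu> \<omega>) (B i)) = 0"
      using AE01' AE_space
    proof eventually_elim
      case (elim \<omega>)
      interpret N: prob_space "\<nu> \<omega>" by (rule nu_prob[OF M bpos tpos DP]) (use elim in auto)
      have sets: "sets (\<nu> \<omega>) = sets borel" by (rule nu_sets[OF M bpos tpos DP]) (use elim in auto)
      hence sp: "space (\<nu> \<omega>) = UNIV" using sets_eq_imp_space_eq[OF sets] by simp
      have "measure (\<nu> \<omega>) (B j) = 0"
        using N.prob_compl[of "{0..1}"] sets elim sp by (simp add: B_def)
      hence "(\<Prod>i\<in>{1..j}. measure (\<nu> \<omega>) (B i)) = 0"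
        using j by (intro prod_zero) auto
      thus ?case by simp
    qed
  qed
  finally have "measure M {\<omega>\<in>space M. \<nu> \<omega> \<in> space (prob_algebra borel) \<and> (\<forall>i\<in>{1..j}. v \<omega> i \<in> B i)} = 0" by simp
  moreover have "{\<omega>\<in>space M. \<nu> \<omega> \<in> space (prob_algebra borel) \<and> (\<forall>i\<in>{1..j}. v \<omega> i \<in> B i)} = {\<omega>\<in>space M. \<not> v \<omega> j \<in> {0..1}}"
    using nus j by (auto simp: B_def)
  ultimately have m0: "measure M {\<omega>\<in>space M. \<not> v \<omega> j \<in> {0..1}} = 0" by simp
  have sm: "{\<omega>\<in>space M. \<not> v \<omega> j \<in> {0..1}} \<in> sets M"
    using v_meas[of j] by measurable
  show ?thesis
    by (subst AE_iff_measurable[OF sm refl], subst emeasure_eq_measure, subst m0) simp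
qed

end

theorem corollary6:
  fixes M :: "'w measure"
    and \<nu> :: "'w \<Rightarrow> real measure"
    and v :: "'w \<Rightarrow> nat \<Rightarrow> real"
    and d :: "'w \<Rightarrow> nat \<Rightarrow> nat"
    and \<beta> \<theta> :: real
    and n :: nat and dd :: "nat \<Rightarrow> nat"
  assumes "prob_space M"
    and "\<beta> > 0" and "\<theta> > 0"
    and DP: "dirichlet_process M \<nu> \<beta> (beta_one \<theta>)"
    and v_meas: "\<And>i. (\<lambda>\<omega>. v \<omega> i) \<in> borel_measurable M"
    and v_ciid: "\<And>A N B. A \<in> sets (prob_algebra borel) \<Longrightarrow> (\<And>i. B i \<in> sets borel) \<Longrightarrow>
        measure M {\<omega> \<in> space M. \<nu> \<omega> \<in> A \<and> (\<forall>i\<in>{1..N}. v \<omega> i \<in> B i)}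
          = (\<integral>\<omega>. indicator A (\<nu> \<omega>) * (\<Prod>i\<in>{1..N}. measure (\<nu> \<omega>) (B i)) \<partial>M)"
    and d_meas: "\<And>l. (\<lambda>\<omega>. d \<omega> l) \<in> measurable M (count_space UNIV)"
    and d_ciid: "\<And>C N js. C \<in> sets (Pi\<^sub>M UNIV (\<lambda>_::nat. borel :: real measure)) \<Longrightarrow>
        measure M {\<omega> \<in> space M. (\<lambda>j. dsb_weight (v \<omega>) j) \<in> C \<and> (\<forall>l\<in>{1..N}. d \<omega> l = js l)}
          = (\<integral>\<omega>. indicator C (\<lambda>j. dsb_weight (v \<omega>) j)
                   * (\<Prod>l\<in>{1..N}. dsb_weight (v \<omega>) (js l)) \<partial>M)"
    and "n \<ge> 1"
    and dd_pos: "\<And>l. l \<in> {1..n} \<Longrightarrow> dd l \<ge> 1"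
  shows "measure M {\<omega> \<in> space M. \<forall>l\<in>{1..n}. d \<omega> l = dd l}
    = (let k = Max (dd ` {1..n});
           r = (\<lambda>i. card {l\<in>{1..n}. dd l = i});
           t = (\<lambda>i. card {l\<in>{1..n}. dd l > i})
       in \<Sum>P\<in>{P. partition_on {1..k} P}.
            (\<beta> * \<theta>) ^ card P / pochhammer \<beta> k
            * (\<Prod>A\<in>P. fact (card A - 1) * fact (\<Sum>i\<in>A. r i)
                 / pochhammer (\<theta> + real (\<Sum>i\<in>A. t i)) (1 + (\<Sum>i\<in>A. r i))))"
proof -
  note M = assms(1) and bpos = assms(2) and tpos = assms(3)
  interpret prob_space M by (rule M)
  define k where "k = Max (dd ` {1..n})"
  define r where "r i = card {l\<in>{1..n}. dd l = i}" for i
  define t where "t i = card {l\<in>{1..n}. dd l > i}" for i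
  define f where "f j y = indicator {0..1} y * y ^ r j * (1 - y) ^ t j" for j and y :: real
  have ddk: "1 \<le> dd l \<and> dd l \<le> k" if "l \<in> {1..n}" for l
    using dd_pos[OF that] that by (auto simp: k_def intro: Max_ge)
  have fpos: "0 \<le> f j y" for j y by (auto simp: f_def indicator_def)
  have fm[measurable]: "f j \<in> borel_measurable borel" for j unfolding f_def by measurable
  have C: "UNIV \<in> sets (Pi\<^sub>M UNIV (\<lambda>_::nat. borel :: real measure))"
  proof -
    have "space (Pi\<^sub>M UNIV (\<lambda>_::nat. borel :: real measure)) = UNIV" by (simp add: space_PiM)
    thus ?thesis using sets.top by metis
  qed
  have "measure M {\<omega> \<in> space M. \<forall>l\<in>{1..n}. d \<omega> l = dd l}
      = measure M {\<omega> \<in> space M. (\<lambda>j. dsb_weight (v \<omega>) j) \<in> UNIV \<and> (\<forall>l\<in>{1..n}. d \<omega> l = dd l)}" by simp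
  also have "\<dots> = (\<integral>\<omega>. indicator UNIV (\<lambda>j. dsb_weight (v \<omega>) j) * (\<Prod>l\<in>{1..n}. dsb_weight (v \<omega>) (dd l)) \<partial>M)"
    by (rule d_ciid[OF C])
  also have "\<dots> = (\<integral>\<omega>. (\<Prod>j\<in>{1..k}. v \<omega> j ^ r j * (1 - v \<omega> j) ^ t j) \<partial>M)"
  proof (intro Bochner_Integration.integral_cong refl)
    fix \<omega>
    have "(\<Prod>l\<in>{1..n}. dsb_weight (v \<omega>) (dd l)) = (\<Prod>j\<in>{1..k}. v \<omega> j ^ r j * (1 - v \<omega> j) ^ t j)"
      unfolding r_def t_def by (rule weights_prod) (rule ddk)
    thus "indicator UNIV (\<lambda>j. dsb_weight (v \<omega>) j) * (\<Prod>l\<in>{1..n}. dsb_weight (v \<omega>) (dd l)) = (\<Prod>j\<in>{1..k}. v \<omega> j ^ r j * (1 - v \<omega> j) ^ t j)"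
      by simp
  qed
  also have "\<dots> = (\<integral>\<omega>. (\<Prod>j\<in>{1..k}. f j (v \<omega> j)) \<partial>M)"
  proof (rule integral_cong_AE)
    show "(\<lambda>\<omega>. \<Prod>j\<in>{1..k}. v \<omega> j ^ r j * (1 - v \<omega> j) ^ t j) \<in> borel_measurable M"
      by (rule borel_measurable_prod) (use v_meas in measurable)
    show "(\<lambda>\<omega>. \<Prod>j\<in>{1..k}. f j (v \<omega> j)) \<in> borel_measurable M"
      by (rule borel_measurable_prod) (rule measurable_compose[OF v_meas fm])
    have AEv': "AE \<omega> in M. v \<omega> j \<in> {0..1}" if "1 \<le> j" for j
      by (rule AEv[OF M bpos tpos DP v_meas _ that]) (rule v_ciid)
    have "AE \<omega> in M. \<forall>j\<in>{1..k}. v \<omega> j \<in> {0..1}"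
      by (rule AE_finite_allI) (use AEv' in auto)
    thus "AE \<omega> in M. (\<Prod>j\<in>{1..k}. v \<omega> j ^ r j * (1 - v \<omega> j) ^ t j) = (\<Prod>j\<in>{1..k}. f j (v \<omega> j))"
      by eventually_elim (auto simp: f_def intro!: prod.cong)
  qed
  also have "\<dots> = enn2real (\<integral>\<^sup>+\<omega>. ennreal (\<Prod>j\<in>{1..k}. f j (v \<omega> j)) \<partial>M)"
    by (rule integral_eq_nn_integral) (auto intro!: prod_nonneg fpos borel_measurable_prod measurable_compose[OF v_meas fm])
  also have "(\<integral>\<^sup>+\<omega>. ennreal (\<Prod>j\<in>{1..k}. f j (v \<omega> j)) \<partial>M)
      = (\<Sum>P\<in>Parts {1..k}. ennreal (cw \<beta> {1..k} P) * (\<Prod>A\<in>P. \<integral>\<^sup>+y. ennreal (\<Prod>j\<in>A. f j y) \<partial>beta_one \<theta>))"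
    by (rule mix_int[OF M bpos tpos DP v_meas v_ciid fpos fm])
  also have "\<dots> = ennreal (\<Sum>P\<in>Parts {1..k}. cw \<beta> {1..k} P * (\<Prod>A\<in>P. \<theta> * fact (\<Sum>i\<in>A. r i) / pochhammer (\<theta> + real (\<Sum>i\<in>A. t i)) (Suc (\<Sum>i\<in>A. r i))))"
  proof -
    have blockint: "(\<integral>\<^sup>+y. ennreal (\<Prod>j\<in>A. f j y) \<partial>beta_one \<theta>)
        = ennreal (\<theta> * fact (\<Sum>i\<in>A. r i) / pochhammer (\<theta> + real (\<Sum>i\<in>A. t i)) (Suc (\<Sum>i\<in>A. r i)))"
      if A: "finite A" "A \<noteq> {}" for A
    proof -
      have "(\<Prod>j\<in>A. f j y) = indicator {0..1} y * y ^ (\<Sum>i\<in>A. r i) * (1 - y) ^ (\<Sum>i\<in>A. t i)" for y :: real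
      proof -
        have "(\<Prod>j\<in>A. f j y) = (\<Prod>j\<in>A. indicator {0..1} y :: real) * ((\<Prod>j\<in>A. y ^ r j) * (\<Prod>j\<in>A. (1 - y) ^ t j))"
          by (simp add: f_def prod.distrib mult_ac)
        also have "(\<Prod>j\<in>A. indicator {0..1} y :: real) = indicator {0..1} y"
          using A by (auto simp: indicator_def card_gt_0_iff)
        finally show ?thesis by (simp add: power_sum mult_ac)
      qed
      hence "(\<integral>\<^sup>+y. ennreal (\<Prod>j\<in>A. f j y) \<partial>beta_one \<theta>)
          = (\<integral>\<^sup>+y. ennreal (indicator {0..1} y * y ^ (\<Sum>i\<in>A. r i) * (1 - y) ^ (\<Sum>i\<in>A. t i)) \<partial>beta_one \<theta>)" by simp
      also have "\<dots> = ennreal (\<theta> * fact (\<Sum>i\<in>A. r i) / pochhammer (\<theta> + real (\<Sum>i\<in>A. t i)) (Suc (\<Sum>i\<in>A. r i)))"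
        by (rule beta_one_nn_integral[OF tpos])
      finally show ?thesis .
    qed
    have nn: "0 \<le> \<theta> * fact (\<Sum>i\<in>A. r i) / pochhammer (\<theta> + real (\<Sum>i\<in>A. t i)) (Suc (\<Sum>i\<in>A. r i))" for A
      using tpos by (intro divide_nonneg_nonneg mult_nonneg_nonneg less_imp_le[OF pochhammer_pos] add_pos_nonneg) (auto simp del: of_nat_sum)
    have "ennreal (cw \<beta> {1..k} P) * (\<Prod>A\<in>P. \<integral>\<^sup>+y. ennreal (\<Prod>j\<in>A. f j y) \<partial>beta_one \<theta>)
        = ennreal (cw \<beta> {1..k} P * (\<Prod>A\<in>P. \<theta> * fact (\<Sum>i\<in>A. r i) / pochhammer (\<theta> + real (\<Sum>i\<in>A. t i)) (Suc (\<Sum>i\<in>A. r i))))"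
      if P: "P \<in> Parts {1..k}" for P
    proof -
      have pP: "partition_on {1..k} P" using P by (simp add: Parts_def)
      have "(\<Prod>A\<in>P. \<integral>\<^sup>+y. ennreal (\<Prod>j\<in>A. f j y) \<partial>beta_one \<theta>)
          = (\<Prod>A\<in>P. ennreal (\<theta> * fact (\<Sum>i\<in>A. r i) / pochhammer (\<theta> + real (\<Sum>i\<in>A. t i)) (Suc (\<Sum>i\<in>A. r i))))"
      proof (rule prod.cong[OF refl])
        fix A assume "A \<in> P"
        moreover have "finite A" using \<open>A \<in> P\<close> partition_onD1[OF pP]
          by (metis Union_upper finite_atLeastAtMost finite_subset)
        moreover have "A \<noteq> {}" using \<open>A \<in> P\<close> partition_onD3[OF pP] by auto
        ultimately show "(\<integral>\<^sup>+y. ennreal (\<Prod>j\<in>A. f j y) \<partial>beta_one \<theta>)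
            = ennreal (\<theta> * fact (\<Sum>i\<in>A. r i) / pochhammer (\<theta> + real (\<Sum>i\<in>A. t i)) (Suc (\<Sum>i\<in>A. r i)))"
          using blockint by blast
      qed
      also have "\<dots> = ennreal (\<Prod>A\<in>P. \<theta> * fact (\<Sum>i\<in>A. r i) / pochhammer (\<theta> + real (\<Sum>i\<in>A. t i)) (Suc (\<Sum>i\<in>A. r i)))"
        by (rule prod_ennreal) (rule nn)
      finally have e: "(\<Prod>A\<in>P. \<integral>\<^sup>+y. ennreal (\<Prod>j\<in>A. f j y) \<partial>beta_one \<theta>)
          = ennreal (\<Prod>A\<in>P. \<theta> * fact (\<Sum>i\<in>A. r i) / pochhammer (\<theta> + real (\<Sum>i\<in>A. t i)) (Suc (\<Sum>i\<in>A. r i)))" .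
      show ?thesis unfolding e
        by (rule ennreal_mult[symmetric], rule cw_nonneg[OF bpos], rule prod_nonneg, rule nn)
    qed
    hence "(\<Sum>P\<in>Parts {1..k}. ennreal (cw \<beta> {1..k} P) * (\<Prod>A\<in>P. \<integral>\<^sup>+y. ennreal (\<Prod>j\<in>A. f j y) \<partial>beta_one \<theta>))
        = (\<Sum>P\<in>Parts {1..k}. ennreal (cw \<beta> {1..k} P * (\<Prod>A\<in>P. \<theta> * fact (\<Sum>i\<in>A. r i) / pochhammer (\<theta> + real (\<Sum>i\<in>A. t i)) (Suc (\<Sum>i\<in>A. r i)))))"
      by (rule sum.cong[OF refl])
    also have "\<dots> = ennreal (\<Sum>P\<in>Parts {1..k}. cw \<beta> {1..k} P * (\<Prod>A\<in>P. \<theta> * fact (\<Sum>i\<in>A. r i) / pochhammer (\<theta> + real (\<Sum>i\<in>A. t i)) (Suc (\<Sum>i\<in>A. r i))))"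
      by (rule sum_ennreal) (intro mult_nonneg_nonneg prod_nonneg cw_nonneg bpos nn)
    finally show ?thesis .
  qed
  also have "enn2real (ennreal (\<Sum>P\<in>Parts {1..k}. cw \<beta> {1..k} P * (\<Prod>A\<in>P. \<theta> * fact (\<Sum>i\<in>A. r i) / pochhammer (\<theta> + real (\<Sum>i\<in>A. t i)) (Suc (\<Sum>i\<in>A. r i)))))
      = (\<Sum>P\<in>Parts {1..k}. cw \<beta> {1..k} P * (\<Prod>A\<in>P. \<theta> * fact (\<Sum>i\<in>A. r i) / pochhammer (\<theta> + real (\<Sum>i\<in>A. t i)) (Suc (\<Sum>i\<in>A. r i))))"
  proof (rule enn2real_ennreal)
    have nn: "0 \<le> \<theta> * fact (\<Sum>i\<in>A. r i) / pochhammer (\<theta> + real (\<Sum>i\<in>A. t i)) (Suc (\<Sum>i\<in>A. r i))" for A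
      using tpos by (intro divide_nonneg_nonneg mult_nonneg_nonneg less_imp_le[OF pochhammer_pos] add_pos_nonneg) (auto simp del: of_nat_sum)
    show "0 \<le> (\<Sum>P\<in>Parts {1..k}. cw \<beta> {1..k} P * (\<Prod>A\<in>P. \<theta> * fact (\<Sum>i\<in>A. r i) / pochhammer (\<theta> + real (\<Sum>i\<in>A. t i)) (Suc (\<Sum>i\<in>A. r i))))"
      by (intro sum_nonneg mult_nonneg_nonneg prod_nonneg cw_nonneg bpos nn)
  qed
  also have "\<dots> = (\<Sum>P\<in>{P. partition_on {1..k} P}.
            (\<beta> * \<theta>) ^ card P / pochhammer \<beta> k
            * (\<Prod>A\<in>P. fact (card A - 1) * fact (\<Sum>i\<in>A. r i)
                 / pochhammer (\<theta> + real (\<Sum>i\<in>A. t i)) (1 + (\<Sum>i\<in>A. r i))))"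
    unfolding Parts_def
  proof (rule sum.cong[OF refl])
    fix P
    have "cw \<beta> {1..k} P * (\<Prod>A\<in>P. \<theta> * fact (\<Sum>i\<in>A. r i) / pochhammer (\<theta> + real (\<Sum>i\<in>A. t i)) (Suc (\<Sum>i\<in>A. r i)))
        = (\<Prod>A\<in>P. (\<beta> * \<theta>) * (fact (card A - 1) * fact (\<Sum>i\<in>A. r i) / pochhammer (\<theta> + real (\<Sum>i\<in>A. t i)) (1 + (\<Sum>i\<in>A. r i)))) / pochhammer \<beta> k"
    proof -
      have "cw \<beta> {1..k} P * (\<Prod>A\<in>P. \<theta> * fact (\<Sum>i\<in>A. r i) / pochhammer (\<theta> + real (\<Sum>i\<in>A. t i)) (Suc (\<Sum>i\<in>A. r i)))
          = (\<Prod>A\<in>P. (fact (card A - 1) * \<beta>) * (\<theta> * fact (\<Sum>i\<in>A. r i) / pochhammer (\<theta> + real (\<Sum>i\<in>A. t i)) (Suc (\<Sum>i\<in>A. r i)))) / pochhammer \<beta> k"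
        unfolding cw_def prod.distrib by simp
      also have "\<dots> = (\<Prod>A\<in>P. (\<beta> * \<theta>) * (fact (card A - 1) * fact (\<Sum>i\<in>A. r i) / pochhammer (\<theta> + real (\<Sum>i\<in>A. t i)) (1 + (\<Sum>i\<in>A. r i)))) / pochhammer \<beta> k"
        by (intro arg_cong2[where f="(/)"] prod.cong refl) (simp add: mult_ac)
      finally show ?thesis .
    qed
    also have "\<dots> = (\<beta> * \<theta>) ^ card P / pochhammer \<beta> k
            * (\<Prod>A\<in>P. fact (card A - 1) * fact (\<Sum>i\<in>A. r i) / pochhammer (\<theta> + real (\<Sum>i\<in>A. t i)) (1 + (\<Sum>i\<in>A. r i)))"
      unfolding prod.distrib prod_constant by (simp add: power_mult_distrib)
    finally show "cw \<beta> {1..k} P * (\<Prod>A\<in>P. \<theta> * fact (\<Sum>i\<in>A. r i) / pochhammer (\<theta> + real (\<Sum>i\<in>A. t i)) (Suc (\<Sum>i\<in>A. r i)))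
        = (\<beta> * \<theta>) ^ card P / pochhammer \<beta> k
            * (\<Prod>A\<in>P. fact (card A - 1) * fact (\<Sum>i\<in>A. r i) / pochhammer (\<theta> + real (\<Sum>i\<in>A. t i)) (1 + (\<Sum>i\<in>A. r i)))" .
  qed
  finally have X: "measure M {\<omega> \<in> space M. \<forall>l\<in>{1..n}. d \<omega> l = dd l} = (\<Sum>P\<in>{P. partition_on {1..k} P}.
            (\<beta> * \<theta>) ^ card P / pochhammer \<beta> k
            * (\<Prod>A\<in>P. fact (card A - 1) * fact (\<Sum>i\<in>A. r i)
                 / pochhammer (\<theta> + real (\<Sum>i\<in>A. t i)) (1 + (\<Sum>i\<in>A. r i))))" .
  show ?thesis unfolding Let_def using X unfolding k_def r_def t_def .
qed

end
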